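(* Suppose the third-order ODE $u'''=f(x,u,u',u'')$ (with $I_3\ne0$) is equivalent to $\bar u'''=s\bar u'+\bar u$ ($s$ constant) under a contact transformation $\bar x=\varphi(x,u,p)$, $\bar u=\psi(x,u,p)$, $\bar p=\chi(x,u,p)$ with nonzero Jacobian. Then $s=K$, and the transformation can be obtained as follows, all systems below being compatible: (1) there is a nonzero function $a_1(x,u,p)$ solving the linear system $\hat D_xa_1=J_3I_5a_1$, $a_{1_u}=-Q a_1$, $a_{1_p}=\big(I_4I_5-\tfrac{I_7}{J_3}\big)a_1$, $a_{1_q}=0$; (2) $\varphi$ solves $\hat D_x\varphi=-J_3$, $\varphi_u=-I_7$, $\varphi_p=-I_4$; (3) with $\eta=\hat D_x\chi/\hat D_x\varphi$ (a function of $(x,u,p,q)$) and $\bar f=s\chi+\psi$, the functions $\eta,\chi,\psi$ solve $\hat D_x\eta=-J_3\bar f$, $\eta_u=\big(\tfrac{s+I_5^2}{2}+\tfrac{I_2}{2J_3^2}\big)a_1-I_7\bar f$, $\eta_p=\big(\tfrac{I_5}{J_3}+\tfrac{I_1}{3J_3^2}\big)a_1-I_4\bar f$, $\eta_q=\tfrac{a_1}{J_3^2}$; $\hat D_x\chi=-J_3\eta$, $\chi_u=-I_5a_1-I_7\eta$, $\chi_p=-\tfrac{a_1}{J_3}-I_4\eta$; $I_7\hat D_x\psi=J_3(\psi_u-a_1)$, $\psi_x=\chi\varphi_x-pa_1$, $\psi_p=-I_4\chi$; where also $\chi=\hat D_x\psi/\hat D_x\varphi$.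
   Context: Coordinates $(x,u,p,q)$ with $p=u'$, $q=u''$; subscripts denote partial derivatives; $\hat D_x=\partial_x+p\partial_u+q\partial_p+f\partial_q$. A contact transformation is a local diffeomorphism $\bar x=\varphi(x,u,p)$, $\bar u=\psi(x,u,p)$, $\bar p=\chi(x,u,p)$ with $d\bar u-\bar p\,d\bar x=\lambda(du-p\,dx)$ for some $\lambda(x,u,p)$. Define $I_1=-f_q$, $I_2=-\tfrac29I_1^2-f_p-\tfrac13\hat D_xI_1$, $I_3=-\tfrac13I_1I_2-f_u-\tfrac12\hat D_xI_2$, $J_3=I_3^{1/3}$ (real cube root), $I_4=J_{3_q}$, $I_5=\frac{1}{3J_3^2}(I_1J_3+3\hat D_xJ_3)$, $I_7=-I_{5_q}J_3^2$, $I_9=2J_3\hat D_xI_5-I_2+J_3^2I_5^2$, $K=I_9/J_3^2$, and $Q=-\frac{I_1I_7+3J_3^2I_{5_p}+3J_{3_u}-3J_3I_4\hat D_xI_5}{3J_3}$. *)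

theory Defs
  imports "HOL-Analysis.Analysis"
begin

text \<open>Functions of the jet coordinates (x,u,p,q), curried.\<close>
type_synonym fn4 = "real \<Rightarrow> real \<Rightarrow> real \<Rightarrow> real \<Rightarrow> real"
type_synonym fn3 = "real \<Rightarrow> real \<Rightarrow> real \<Rightarrow> real"

definition lift3 :: "fn3 \<Rightarrow> fn4" where
  "lift3 F = (\<lambda>x u p q. F x u p)"

definition pdx :: "fn4 \<Rightarrow> fn4" where
  "pdx F = (\<lambda>x u p q. deriv (\<lambda>t. F t u p q) x)"
definition pdu :: "fn4 \<Rightarrow> fn4" where
  "pdu F = (\<lambda>x u p q. deriv (\<lambda>t. F x t p q) u)"
definition pdp :: "fn4 \<Rightarrow> fn4" where
  "pdp F = (\<lambda>x u p q. deriv (\<lambda>t. F x u t q) p)"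
definition pdq :: "fn4 \<Rightarrow> fn4" where
  "pdq F = (\<lambda>x u p q. deriv (\<lambda>t. F x u p t) q)"

fun pdir :: "nat \<Rightarrow> fn4 \<Rightarrow> fn4" where
  "pdir 0 F = pdx F"
| "pdir (Suc 0) F = pdu F"
| "pdir (Suc (Suc 0)) F = pdp F"
| "pdir _ F = pdq F"

definition iter_pd :: "nat list \<Rightarrow> fn4 \<Rightarrow> fn4" where
  "iter_pd ds F = foldr pdir ds F"

definition partial_exists :: "nat \<Rightarrow> fn4 \<Rightarrow> real \<Rightarrow> real \<Rightarrow> real \<Rightarrow> real \<Rightarrow> bool" where
  "partial_exists i F x u p q \<longleftrightarrow>
     (if i = 0 then (\<lambda>t. F t u p q) differentiable (at x)
      else if i = 1 then (\<lambda>t. F x t p q) differentiable (at u)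
      else if i = 2 then (\<lambda>t. F x u t q) differentiable (at p)
      else (\<lambda>t. F x u p t) differentiable (at q))"

definition smooth4 :: "(real \<times> real \<times> real \<times> real) set \<Rightarrow> fn4 \<Rightarrow> bool" where
  "smooth4 W F \<longleftrightarrow>
     (\<forall>ds. continuous_on W (\<lambda>(x,u,p,q). iter_pd ds F x u p q) \<and>
           (\<forall>i<4. \<forall>x u p q. (x,u,p,q) \<in> W \<longrightarrow> partial_exists i (iter_pd ds F) x u p q))"

text \<open>Total derivative along the equation u''' = f.\<close>
definition Dhat :: "fn4 \<Rightarrow> fn4 \<Rightarrow> fn4" where
  "Dhat f F = (\<lambda>x u p q. pdx F x u p q + p * pdu F x u p q + q * pdp F x u p q
                         + f x u p q * pdq F x u p q)"

definition I1 :: "fn4 \<Rightarrow> fn4" where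
  "I1 f = (\<lambda>x u p q. - pdq f x u p q)"
definition I2 :: "fn4 \<Rightarrow> fn4" where
  "I2 f = (\<lambda>x u p q. - (2/9) * (I1 f x u p q)^2 - pdp f x u p q - (1/3) * Dhat f (I1 f) x u p q)"
definition I3 :: "fn4 \<Rightarrow> fn4" where
  "I3 f = (\<lambda>x u p q. - (1/3) * I1 f x u p q * I2 f x u p q - pdu f x u p q
                     - (1/2) * Dhat f (I2 f) x u p q)"
definition J3 :: "fn4 \<Rightarrow> fn4" where
  "J3 f = (\<lambda>x u p q. root 3 (I3 f x u p q))"
definition I4 :: "fn4 \<Rightarrow> fn4" where
  "I4 f = pdq (J3 f)"
definition I5 :: "fn4 \<Rightarrow> fn4" where
  "I5 f = (\<lambda>x u p q. (I1 f x u p q * J3 f x u p q + 3 * Dhat f (J3 f) x u p q)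
                     / (3 * (J3 f x u p q)^2))"
definition I7 :: "fn4 \<Rightarrow> fn4" where
  "I7 f = (\<lambda>x u p q. - pdq (I5 f) x u p q * (J3 f x u p q)^2)"
definition I9 :: "fn4 \<Rightarrow> fn4" where
  "I9 f = (\<lambda>x u p q. 2 * J3 f x u p q * Dhat f (I5 f) x u p q - I2 f x u p q
                     + (J3 f x u p q)^2 * (I5 f x u p q)^2)"
definition Kinv :: "fn4 \<Rightarrow> fn4" where
  "Kinv f = (\<lambda>x u p q. I9 f x u p q / (J3 f x u p q)^2)"
definition Qinv :: "fn4 \<Rightarrow> fn4" where
  "Qinv f = (\<lambda>x u p q. - (I1 f x u p q * I7 f x u p q
                          + 3 * (J3 f x u p q)^2 * pdp (I5 f) x u p q
                          + 3 * pdu (J3 f) x u p q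
                          - 3 * J3 f x u p q * I4 f x u p q * Dhat f (I5 f) x u p q)
                        / (3 * J3 f x u p q))"

definition jac3 :: "fn3 \<Rightarrow> fn3 \<Rightarrow> fn3 \<Rightarrow> fn3" where
  "jac3 A B C = (\<lambda>x u p.
     let a1 = pdx (lift3 A) x u p 0; a2 = pdu (lift3 A) x u p 0; a3 = pdp (lift3 A) x u p 0;
         b1 = pdx (lift3 B) x u p 0; b2 = pdu (lift3 B) x u p 0; b3 = pdp (lift3 B) x u p 0;
         c1 = pdx (lift3 C) x u p 0; c2 = pdu (lift3 C) x u p 0; c3 = pdp (lift3 C) x u p 0
     in a1 * (b2 * c3 - b3 * c2) - a2 * (b1 * c3 - b3 * c1) + a3 * (b1 * c2 - b2 * c1))"

text \<open>Contact condition d psi - chi d phi = lambda (du - p dx) on the (x,u,p)-points of W.\<close>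
definition is_contact_on :: "(real \<times> real \<times> real \<times> real) set \<Rightarrow> fn3 \<Rightarrow> fn3 \<Rightarrow> fn3 \<Rightarrow> bool" where
  "is_contact_on W phi psi chi \<longleftrightarrow> (\<exists>lam::fn3. \<forall>x u p q. (x,u,p,q) \<in> W \<longrightarrow>
      pdx (lift3 psi) x u p q - chi x u p * pdx (lift3 phi) x u p q = - p * lam x u p \<and>
      pdu (lift3 psi) x u p q - chi x u p * pdu (lift3 phi) x u p q = lam x u p \<and>
      pdp (lift3 psi) x u p q - chi x u p * pdp (lift3 phi) x u p q = 0)"

text \<open>Second prolongation coordinate qbar = Dhat chi / Dhat phi (does not involve f).\<close>
definition eta_of :: "fn4 \<Rightarrow> fn3 \<Rightarrow> fn3 \<Rightarrow> fn4" where
  "eta_of f phi chi = (\<lambda>x u p q. Dhat f (lift3 chi) x u p q / Dhat f (lift3 phi) x u p q)"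

text \<open>u''' = f is mapped to ubar''' = s ubar' + ubar by the contact transformation
  (phi,psi,chi) on W: the third prolongation maps the equation to the equation, i.e.
  Dhat eta = fbar(phi,psi,chi,eta) * Dhat phi with fbar = s pbar + ubar.\<close>
definition contact_equiv_on ::
  "(real \<times> real \<times> real \<times> real) set \<Rightarrow> fn4 \<Rightarrow> real \<Rightarrow> fn3 \<Rightarrow> fn3 \<Rightarrow> fn3 \<Rightarrow> bool" where
  "contact_equiv_on W f s phi psi chi \<longleftrightarrow>
     smooth4 W (lift3 phi) \<and> smooth4 W (lift3 psi) \<and> smooth4 W (lift3 chi) \<and>
     is_contact_on W phi psi chi \<and>
     (\<forall>x u p q. (x,u,p,q) \<in> W \<longrightarrow>
        jac3 phi psi chi x u p \<noteq> 0 \<and>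
        Dhat f (lift3 phi) x u p q \<noteq> 0 \<and>
        Dhat f (eta_of f phi chi) x u p q
          = (s * chi x u p + psi x u p) * Dhat f (lift3 phi) x u p q)"

end

theory Submission
  imports Defs
begin


type_synonym pt4 = "real \<times> real \<times> real \<times> real"

definition ap :: "fn4 \<Rightarrow> pt4 \<Rightarrow> real" where
  "ap F w = (case w of (x,u,p,q) \<Rightarrow> F x u p q)"

definition upd :: "nat \<Rightarrow> pt4 \<Rightarrow> real \<Rightarrow> pt4" where
  "upd i w t = (case w of (x,u,p,q) \<Rightarrow>
     (if i = 0 then t else x, if i = 1 then t else u, if i = 2 then t else p, if 3 \<le> i then t else q))"

definition crd :: "nat \<Rightarrow> pt4 \<Rightarrow> real" where
  "crd i w = (case w of (x,u,p,q) \<Rightarrow> (if i = 0 then x else if i = 1 then u else if i = 2 then p else q))"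

definition pdr :: "nat \<Rightarrow> fn4 \<Rightarrow> fn4" where
  "pdr i F = (\<lambda>x u p q. deriv (\<lambda>t. ap F (upd i (x,u,p,q) t)) (crd i (x,u,p,q)))"

lemma ap_simp [simp]: "ap F (x,u,p,q) = F x u p q" by (simp add: ap_def)

lemma pdx_pdr: "pdx F = pdr 0 F" by (simp add: pdx_def pdr_def upd_def crd_def)
lemma pdu_pdr: "pdu F = pdr 1 F" by (simp add: pdu_def pdr_def upd_def crd_def)
lemma pdp_pdr: "pdp F = pdr 2 F" by (simp add: pdp_def pdr_def upd_def crd_def)
lemma pdq_pdr: "pdq F = pdr 3 F" by (simp add: pdq_def pdr_def upd_def crd_def)

lemma pdir_pdr: "pdir i F = pdr (min i 3) F"
proof -
  consider "i = 0" | "i = 1" | "i = 2" | "3 \<le> i" by linarith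
  then show ?thesis
  proof cases
    case 4
    then obtain k where "i = Suc (Suc (Suc k))" by (metis Suc3_eq_add_3 add.commute le_add_diff_inverse2)
    then show ?thesis by (simp add: pdq_pdr numeral_3_eq_3)
  qed (auto simp: pdx_pdr pdu_pdr pdp_pdr numeral_2_eq_2)
qed

lemma partial_exists_pdr:
  "partial_exists i F x u p q \<longleftrightarrow> (\<lambda>t. ap F (upd i (x,u,p,q) t)) differentiable (at (crd i (x,u,p,q)))"
  by (auto simp: partial_exists_def upd_def crd_def)

lemma upd_crd [simp]: "upd i w (crd i w) = w"
  by (cases w) (auto simp: upd_def crd_def)

lemma upd_cont: "continuous_on UNIV (upd i w)"
proof -
  obtain x u p q where w: "w = (x,u,p,q)" by (cases w) auto
  consider "i = 0" | "i = 1" | "i = 2" | "3 \<le> i" by linarith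
  then show ?thesis
    by cases (auto simp: w upd_def intro!: continuous_intros)
qed

lemma ev_upd:
  assumes "open W" "w \<in> W"
  shows "eventually (\<lambda>t. upd i w t \<in> W) (nhds (crd i w))"
proof -
  have "open (upd i w -` W)"
    using continuous_on_open_vimage[of UNIV "upd i w"] upd_cont assms(1) by auto
  moreover have "crd i w \<in> upd i w -` W" using assms(2) by simp
  ultimately show ?thesis using eventually_nhds_in_open by fastforce
qed

definition agree :: "pt4 set \<Rightarrow> fn4 \<Rightarrow> fn4 \<Rightarrow> bool" where
  "agree W F G \<longleftrightarrow> (\<forall>x u p q. (x,u,p,q) \<in> W \<longrightarrow> F x u p q = G x u p q)"

lemma agree_ev:
  assumes "open W" "(x,u,p,q) \<in> W" "agree W F G"
  shows "eventually (\<lambda>t. ap F (upd i (x,u,p,q) t) = ap G (upd i (x,u,p,q) t)) (nhds (crd i (x,u,p,q)))"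
  using ev_upd[OF assms(1,2), of i]
  by (rule eventually_mono) (use assms(3) in \<open>auto simp: agree_def ap_def split: prod.splits\<close>)

lemma pdr_cong:
  assumes "open W" "(x,u,p,q) \<in> W" "agree W F G"
  shows "pdr i F x u p q = pdr i G x u p q"
  unfolding pdr_def by (rule deriv_cong_ev[OF agree_ev[OF assms]]) simp

lemma agree_pdr: "open W \<Longrightarrow> agree W F G \<Longrightarrow> agree W (pdr i F) (pdr i G)"
  using pdr_cong by (auto simp: agree_def)

lemma pe_cong:
  assumes "open W" "(x,u,p,q) \<in> W" "agree W F G" "partial_exists i F x u p q"
  shows "partial_exists i G x u p q"
proof -
  have "(\<lambda>t. ap F (upd i (x,u,p,q) t)) differentiable (at (crd i (x,u,p,q)))"
    using assms(4) by (simp add: partial_exists_pdr)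
  then obtain D where "((\<lambda>t. ap F (upd i (x,u,p,q) t)) has_real_derivative D) (at (crd i (x,u,p,q)))"
    by (auto simp: real_differentiable_def)
  then have "((\<lambda>t. ap G (upd i (x,u,p,q) t)) has_real_derivative D) (at (crd i (x,u,p,q)))"
    using DERIV_cong_ev[OF refl agree_ev[OF assms(1-3), of i] refl] by simp
  then show ?thesis by (auto simp: partial_exists_pdr real_differentiable_def)
qed

lemma agree_sym: "agree W F G \<Longrightarrow> agree W G F" by (auto simp: agree_def)
lemma agree_trans: "agree W F G \<Longrightarrow> agree W G H \<Longrightarrow> agree W F H" by (auto simp: agree_def)

lemma cont_cong:
  assumes "agree W F G" "continuous_on W (\<lambda>(x,u,p,q). F x u p q)"
  shows "continuous_on W (\<lambda>(x,u,p,q). G x u p q)"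
  using assms(2) by (rule continuous_on_cong[THEN iffD1, rotated 2]) (use assms(1) in \<open>auto simp: agree_def\<close>)


inductive alg :: "pt4 set \<Rightarrow> fn4 \<Rightarrow> bool" for W where
  sm: "smooth4 W F \<Longrightarrow> alg W F"
| cst: "alg W (\<lambda>x u p q. c)"
| cx: "alg W (\<lambda>x u p q. x)"
| cu: "alg W (\<lambda>x u p q. u)"
| cp: "alg W (\<lambda>x u p q. p)"
| cq: "alg W (\<lambda>x u p q. q)"
| add: "alg W F \<Longrightarrow> alg W G \<Longrightarrow> alg W (\<lambda>x u p q. F x u p q + G x u p q)"
| mul: "alg W F \<Longrightarrow> alg W G \<Longrightarrow> alg W (\<lambda>x u p q. F x u p q * G x u p q)"
| inv: "alg W G \<Longrightarrow> (\<forall>x u p q. (x,u,p,q) \<in> W \<longrightarrow> G x u p q \<noteq> 0) \<Longrightarrow> alg W (\<lambda>x u p q. inverse (G x u p q))"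
| rt: "alg W G \<Longrightarrow> (\<forall>x u p q. (x,u,p,q) \<in> W \<longrightarrow> G x u p q \<noteq> 0) \<Longrightarrow> alg W (\<lambda>x u p q. root 3 (G x u p q))"
| cong: "alg W F \<Longrightarrow> agree W F G \<Longrightarrow> alg W G"

lemma ap_split: "(\<lambda>(x,u,p,q). F x u p q) = ap F" by (auto simp: ap_def)

lemma ap_add: "ap (\<lambda>x u p q. F x u p q + G x u p q) = (\<lambda>w. ap F w + ap G w)"
  by (auto simp: ap_def)
lemma ap_mul: "ap (\<lambda>x u p q. F x u p q * G x u p q) = (\<lambda>w. ap F w * ap G w)"
  by (auto simp: ap_def)
lemma ap_inv: "ap (\<lambda>x u p q. inverse (G x u p q)) = (\<lambda>w. inverse (ap G w))"
  by (auto simp: ap_def)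
lemma ap_rt: "ap (\<lambda>x u p q. root 3 (G x u p q)) = (\<lambda>w. root 3 (ap G w))"
  by (auto simp: ap_def)
lemma ap_cst: "ap (\<lambda>x u p q. c) = (\<lambda>w. c)" by (auto simp: ap_def)
lemma ap_cx: "ap (\<lambda>x u p q. x) = (\<lambda>w. fst w)" by (auto simp: ap_def)
lemma ap_cu: "ap (\<lambda>x u p q. u) = (\<lambda>w. fst (snd w))" by (auto simp: ap_def)
lemma ap_cp: "ap (\<lambda>x u p q. p) = (\<lambda>w. fst (snd (snd w)))" by (auto simp: ap_def)
lemma ap_cq: "ap (\<lambda>x u p q. q) = (\<lambda>w. snd (snd (snd w)))" by (auto simp: ap_def)

lemma pe_min: "partial_exists i F = partial_exists (min i 3) F"
  by (auto simp: partial_exists_def min_def fun_eq_iff)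

lemma upd_min: "upd i = upd (min i 3)"
  by (auto simp: upd_def min_def fun_eq_iff)
lemma crd_min: "crd i = crd (min i 3)"
  by (auto simp: crd_def min_def fun_eq_iff)
lemma pdr_min: "pdr i = pdr (min i 3)"
  unfolding pdr_def by (metis upd_min crd_min)

lemma rdiff_fdiff: "(f::real\<Rightarrow>real) differentiable (at x) \<Longrightarrow> f field_differentiable (at x)"
  by (metis DERIV_deriv_iff_field_differentiable DERIV_deriv_iff_real_differentiable)

lemma iter_pd_snoc: "iter_pd (ds @ [d]) F = iter_pd ds (pdir d F)"
  by (simp add: iter_pd_def)

lemma smooth_pdr:
  assumes "smooth4 W F" shows "smooth4 W (pdr i F)"
proof -
  have e: "pdr i F = pdir (min i 3) F" using pdir_pdr[of "min i 3" F] pdr_min[of i] by simp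
  show ?thesis unfolding smooth4_def e iter_pd_snoc[symmetric]
    using assms unfolding smooth4_def by blast
qed

lemma smooth_basic:
  assumes "smooth4 W F"
  shows "continuous_on W (ap F)" "(x,u,p,q) \<in> W \<Longrightarrow> partial_exists i F x u p q"
proof -
  show "continuous_on W (ap F)" using assms unfolding smooth4_def
    by (metis ap_split iter_pd_def foldr.simps(1) id_apply)
  assume w: "(x,u,p,q) \<in> W"
  have "partial_exists (min i 3) (iter_pd [] F) x u p q" using assms w unfolding smooth4_def by auto
  then show "partial_exists i F x u p q" using pe_min by (simp add: iter_pd_def)
qed

lemma diff_line_cst: "(\<lambda>t. c) differentiable (at y)" by simp

lemma ap_upd_coords:
  "ap (\<lambda>x u p q. x) (upd i w t) = (if i = 0 then t else fst w)"
  "ap (\<lambda>x u p q. u) (upd i w t) = (if i = 1 then t else fst (snd w))"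
  "ap (\<lambda>x u p q. p) (upd i w t) = (if i = 2 then t else fst (snd (snd w)))"
  "ap (\<lambda>x u p q. q) (upd i w t) = (if 3 \<le> i then t else snd (snd (snd w)))"
  by (cases w; simp add: upd_def)+

lemma deriv_if_line: "deriv (\<lambda>t. if b then t else c) y = (if b then 1 else 0)"
  by (cases b) simp_all

lemma diff_if_line: "(\<lambda>t::real. if b then t else c) differentiable (at y)"
  by (cases b) simp_all

lemma pe_intro:
  assumes "(\<lambda>t. ap F (upd i (x,u,p,q) t)) differentiable (at (crd i (x,u,p,q)))"
  shows "partial_exists i F x u p q"
  using assms by (simp add: partial_exists_pdr)

lemma pe_dest:
  assumes "partial_exists i F x u p q"
  shows "(\<lambda>t. ap F (upd i (x,u,p,q) t)) differentiable (at (crd i (x,u,p,q)))"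
  using assms by (simp add: partial_exists_pdr)

lemma pe_line:
  assumes "\<forall>i x u p q. (x,u,p,q) \<in> W \<longrightarrow> partial_exists i F x u p q" "(x,u,p,q) \<in> W"
  shows "(\<lambda>t. ap F (upd i (x,u,p,q) t)) differentiable (at (crd i (x,u,p,q)))"
  using assms by (simp add: partial_exists_pdr)

lemma pe_linef:
  assumes "\<forall>i x u p q. (x,u,p,q) \<in> W \<longrightarrow> partial_exists i F x u p q" "(x,u,p,q) \<in> W"
  shows "(\<lambda>t. ap F (upd i (x,u,p,q) t)) field_differentiable (at (crd i (x,u,p,q)))"
  using pe_line[OF assms] by (rule rdiff_fdiff)

definition Pstep :: "pt4 set \<Rightarrow> fn4 \<Rightarrow> bool" where
  "Pstep W F \<longleftrightarrow> continuous_on W (ap F) \<and> (\<forall>i x u p q. (x,u,p,q) \<in> W \<longrightarrow> partial_exists i F x u p q)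
     \<and> (\<forall>i. alg W (pdr i F))"

lemma alg_step:
  assumes W: "open W" and "alg W F"
  shows "Pstep W F"
  using assms(2)
proof induction
  case (sm F)
  then show ?case unfolding Pstep_def using smooth_basic smooth_pdr alg.sm by blast
next
  case (cst c)
  have "pdr i (\<lambda>x u p q. c) = (\<lambda>x u p q. 0)" for i by (simp add: pdr_def ap_def)
  then show ?case unfolding Pstep_def
    by (auto simp: ap_cst partial_exists_pdr intro: alg.cst)
next
  case cx
  have "pdr i (\<lambda>x u p q. x) = (\<lambda>x u p q. if i = 0 then 1 else 0)" for i
    by (simp add: pdr_def ap_upd_coords deriv_if_line)
  then show ?case unfolding Pstep_def
  proof (intro conjI allI impI)
    show "continuous_on W (ap (\<lambda>x u p q. x))" by (simp add: ap_cx continuous_intros)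
  qed (auto simp: partial_exists_pdr ap_upd_coords diff_if_line intro: alg.cst)
next
  case cu
  have "pdr i (\<lambda>x u p q. u) = (\<lambda>x u p q. if i = 1 then 1 else 0)" for i
    by (simp add: pdr_def ap_upd_coords deriv_if_line)
  then show ?case unfolding Pstep_def
  proof (intro conjI allI impI)
    show "continuous_on W (ap (\<lambda>x u p q. u))" by (simp add: ap_cu continuous_intros)
  qed (auto simp: partial_exists_pdr ap_upd_coords diff_if_line intro: alg.cst)
next
  case cp
  have "pdr i (\<lambda>x u p q. p) = (\<lambda>x u p q. if i = 2 then 1 else 0)" for i
    by (simp add: pdr_def ap_upd_coords deriv_if_line)
  then show ?case unfolding Pstep_def
  proof (intro conjI allI impI)
    show "continuous_on W (ap (\<lambda>x u p q. p))" by (simp add: ap_cp continuous_intros)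
  qed (auto simp: partial_exists_pdr ap_upd_coords diff_if_line intro: alg.cst)
next
  case cq
  have "pdr i (\<lambda>x u p q. q) = (\<lambda>x u p q. if 3 \<le> i then 1 else 0)" for i
    by (simp add: pdr_def ap_upd_coords deriv_if_line)
  then show ?case unfolding Pstep_def
  proof (intro conjI allI impI)
    show "continuous_on W (ap (\<lambda>x u p q. q))" by (simp add: ap_cq continuous_intros)
  qed (auto simp: partial_exists_pdr ap_upd_coords diff_if_line intro: alg.cst)
next
  case (add F G)
  from add.IH have cF: "continuous_on W (ap F)" and pF: "\<And>i x u p q. (x,u,p,q) \<in> W \<Longrightarrow> partial_exists i F x u p q"
    and aF: "\<And>i. alg W (pdr i F)" and cG: "continuous_on W (ap G)"
    and pG: "\<And>i x u p q. (x,u,p,q) \<in> W \<Longrightarrow> partial_exists i G x u p q"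
    and aG: "\<And>i. alg W (pdr i G)" unfolding Pstep_def by blast+
  have ag: "agree W (pdr i (\<lambda>x u p q. F x u p q + G x u p q)) (\<lambda>x u p q. pdr i F x u p q + pdr i G x u p q)" for i
    unfolding agree_def
  proof (intro allI impI)
    fix x u p q assume w: "(x,u,p,q) \<in> W"
    have dF: "(\<lambda>t. ap F (upd i (x,u,p,q) t)) field_differentiable (at (crd i (x,u,p,q)))"
      using pF[OF w] by (simp add: partial_exists_pdr rdiff_fdiff)
    have dG: "(\<lambda>t. ap G (upd i (x,u,p,q) t)) field_differentiable (at (crd i (x,u,p,q)))"
      using pG[OF w] by (simp add: partial_exists_pdr rdiff_fdiff)
    show "pdr i (\<lambda>x u p q. F x u p q + G x u p q) x u p q = pdr i F x u p q + pdr i G x u p q"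
      unfolding pdr_def ap_add using deriv_add[OF dF dG] by simp
  qed
  show ?case unfolding Pstep_def
  proof (intro conjI allI impI)
    show "continuous_on W (ap (\<lambda>x u p q. F x u p q + G x u p q))"
      unfolding ap_add by (rule continuous_on_add[OF cF cG])
    show "partial_exists i (\<lambda>x u p q. F x u p q + G x u p q) x u p q" if w: "(x,u,p,q) \<in> W" for i x u p q
    proof -
      have "(\<lambda>t. ap F (upd i (x,u,p,q) t)) differentiable (at (crd i (x,u,p,q)))"
           "(\<lambda>t. ap G (upd i (x,u,p,q) t)) differentiable (at (crd i (x,u,p,q)))"
        using pF[OF w] pG[OF w] by (simp_all add: partial_exists_pdr)
      then show ?thesis unfolding partial_exists_pdr ap_add by (rule differentiable_add)
    qed
    show "alg W (pdr i (\<lambda>x u p q. F x u p q + G x u p q))" for i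
      by (rule alg.cong[OF alg.add[OF aF aG] agree_sym[OF ag]])
  qed
next
  case (mul F G)
  from mul.IH have cF: "continuous_on W (ap F)" and pF: "\<And>i x u p q. (x,u,p,q) \<in> W \<Longrightarrow> partial_exists i F x u p q"
    and aF: "\<And>i. alg W (pdr i F)" and cG: "continuous_on W (ap G)"
    and pG: "\<And>i x u p q. (x,u,p,q) \<in> W \<Longrightarrow> partial_exists i G x u p q"
    and aG: "\<And>i. alg W (pdr i G)" unfolding Pstep_def by blast+
  have ag: "agree W (pdr i (\<lambda>x u p q. F x u p q * G x u p q))
     (\<lambda>x u p q. F x u p q * pdr i G x u p q + pdr i F x u p q * G x u p q)" for i
    unfolding agree_def
  proof (intro allI impI)
    fix x u p q assume w: "(x,u,p,q) \<in> W"
    have dF: "(\<lambda>t. ap F (upd i (x,u,p,q) t)) field_differentiable (at (crd i (x,u,p,q)))"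
      using pF[OF w] by (simp add: partial_exists_pdr rdiff_fdiff)
    have dG: "(\<lambda>t. ap G (upd i (x,u,p,q) t)) field_differentiable (at (crd i (x,u,p,q)))"
      using pG[OF w] by (simp add: partial_exists_pdr rdiff_fdiff)
    show "pdr i (\<lambda>x u p q. F x u p q * G x u p q) x u p q = F x u p q * pdr i G x u p q + pdr i F x u p q * G x u p q"
      unfolding pdr_def ap_mul using deriv_mult[OF dF dG] by simp
  qed
  show ?case unfolding Pstep_def
  proof (intro conjI allI impI)
    show "continuous_on W (ap (\<lambda>x u p q. F x u p q * G x u p q))"
      unfolding ap_mul by (rule continuous_on_mult[OF cF cG])
    show "partial_exists i (\<lambda>x u p q. F x u p q * G x u p q) x u p q" if w: "(x,u,p,q) \<in> W" for i x u p q
    proof -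
      have "(\<lambda>t. ap F (upd i (x,u,p,q) t)) differentiable (at (crd i (x,u,p,q)))"
           "(\<lambda>t. ap G (upd i (x,u,p,q) t)) differentiable (at (crd i (x,u,p,q)))"
        using pF[OF w] pG[OF w] by (simp_all add: partial_exists_pdr)
      then show ?thesis unfolding partial_exists_pdr ap_mul by (rule differentiable_mult)
    qed
    show "alg W (pdr i (\<lambda>x u p q. F x u p q * G x u p q))" for i
      by (rule alg.cong[OF alg.add[OF alg.mul[OF mul.hyps(1) aG] alg.mul[OF aF mul.hyps(2)]] agree_sym[OF ag]])
  qed
next
  case (inv G)
  from inv.IH have cG: "continuous_on W (ap G)"
    and pG: "\<And>i x u p q. (x,u,p,q) \<in> W \<Longrightarrow> partial_exists i G x u p q"
    and aG: "\<And>i. alg W (pdr i G)" unfolding Pstep_def by blast+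
  have nz: "\<And>x u p q. (x,u,p,q) \<in> W \<Longrightarrow> G x u p q \<noteq> 0" using inv.hyps(2) by blast
  have ag: "agree W (pdr i (\<lambda>x u p q. inverse (G x u p q)))
     (\<lambda>x u p q. (-1) * pdr i G x u p q * (inverse (G x u p q) * inverse (G x u p q)))" for i
    unfolding agree_def
  proof (intro allI impI)
    fix x u p q assume w: "(x,u,p,q) \<in> W"
    have d: "(\<lambda>t. ap G (upd i (x,u,p,q) t)) field_differentiable (at (crd i (x,u,p,q)))"
      using pG[OF w] by (simp add: partial_exists_pdr rdiff_fdiff)
    have nz': "ap G (upd i (x,u,p,q) (crd i (x,u,p,q))) \<noteq> 0" using nz[OF w] by simp
    have "pdr i (\<lambda>x u p q. inverse (G x u p q)) x u p q = - pdr i G x u p q / (G x u p q)^2"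
      unfolding pdr_def ap_inv using deriv_inverse[OF d nz'] by simp
    also have "\<dots> = (-1) * pdr i G x u p q * (inverse (G x u p q) * inverse (G x u p q))"
      by (simp add: divide_inverse power2_eq_square)
    finally show "pdr i (\<lambda>x u p q. inverse (G x u p q)) x u p q = \<dots>" .
  qed
  show ?case unfolding Pstep_def
  proof (intro conjI allI impI)
    show "continuous_on W (ap (\<lambda>x u p q. inverse (G x u p q)))"
      unfolding ap_inv by (rule continuous_on_inverse[OF cG]) (auto simp: ap_def nz)
    show "partial_exists i (\<lambda>x u p q. inverse (G x u p q)) x u p q" if w: "(x,u,p,q) \<in> W" for i x u p q
    proof -
      have d: "((\<lambda>t. ap G (upd i (x,u,p,q) t)) has_real_derivative pdr i G x u p q) (at (crd i (x,u,p,q)))"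
        using pG[OF w] unfolding pdr_def partial_exists_pdr by (simp only: DERIV_deriv_iff_real_differentiable)
      have "((\<lambda>t. inverse (ap G (upd i (x,u,p,q) t))) has_real_derivative
          - (pdr i G x u p q * (inverse (G x u p q) * inverse (G x u p q)))) (at (crd i (x,u,p,q)))"
        using DERIV_inverse_fun[OF d] nz[OF w] by simp
      then show ?thesis unfolding partial_exists_pdr ap_inv real_differentiable_def by blast
    qed
    show "alg W (pdr i (\<lambda>x u p q. inverse (G x u p q)))" for i
      by (rule alg.cong[OF alg.mul[OF alg.mul[OF alg.cst aG] alg.mul[OF alg.inv[OF inv.hyps] alg.inv[OF inv.hyps]]] agree_sym[OF ag]])
  qed
next
  case (rt G)
  from rt.IH have cG: "continuous_on W (ap G)"
    and pG: "\<And>i x u p q. (x,u,p,q) \<in> W \<Longrightarrow> partial_exists i G x u p q"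
    and aG: "\<And>i. alg W (pdr i G)" unfolding Pstep_def by blast+
  have nz: "\<And>x u p q. (x,u,p,q) \<in> W \<Longrightarrow> G x u p q \<noteq> 0" using rt.hyps(2) by blast
  have dr: "((\<lambda>t. root 3 (ap G (upd i (x,u,p,q) t))) has_real_derivative
          inverse (real 3 * root 3 (G x u p q) ^ (3 - Suc 0)) * pdr i G x u p q) (at (crd i (x,u,p,q)))"
    if w: "(x,u,p,q) \<in> W" for i x u p q
  proof -
    have d: "((\<lambda>t. ap G (upd i (x,u,p,q) t)) has_real_derivative pdr i G x u p q) (at (crd i (x,u,p,q)))"
      using pG[OF w] unfolding pdr_def partial_exists_pdr by (simp only: DERIV_deriv_iff_real_differentiable)
    have r: "(root 3 has_real_derivative inverse (real 3 * root 3 (G x u p q) ^ (3 - Suc 0))) (at (G x u p q))"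
      by (rule DERIV_odd_real_root) (use nz[OF w] in auto)
    have r': "(root 3 has_real_derivative inverse (real 3 * root 3 (G x u p q) ^ (3 - Suc 0)))
        (at ((\<lambda>t. ap G (upd i (x,u,p,q) t)) (crd i (x,u,p,q))))" using r by simp
    show ?thesis using DERIV_chain2[OF r' d] by simp
  qed
  have ag: "agree W (pdr i (\<lambda>x u p q. root 3 (G x u p q)))
     (\<lambda>x u p q. pdr i G x u p q * (inverse 3 * (inverse (root 3 (G x u p q)) * inverse (root 3 (G x u p q)))))" for i
    unfolding agree_def
  proof (intro allI impI)
    fix x u p q assume w: "(x,u,p,q) \<in> W"
    have "pdr i (\<lambda>x u p q. root 3 (G x u p q)) x u p q =
          inverse (real 3 * root 3 (G x u p q) ^ (3 - Suc 0)) * pdr i G x u p q"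
      using DERIV_imp_deriv[OF dr[OF w]] by (simp add: pdr_def ap_rt)
    also have "\<dots> = pdr i G x u p q * (inverse 3 * (inverse (root 3 (G x u p q)) * inverse (root 3 (G x u p q))))"
      by (simp add: power2_eq_square numeral_3_eq_3 mult.commute)
    finally show "pdr i (\<lambda>x u p q. root 3 (G x u p q)) x u p q = \<dots>" .
  qed
  have nzr: "\<forall>x u p q. (x,u,p,q) \<in> W \<longrightarrow> root 3 (G x u p q) \<noteq> 0" using nz by simp
  show ?case unfolding Pstep_def
  proof (intro conjI allI impI)
    show "continuous_on W (ap (\<lambda>x u p q. root 3 (G x u p q)))"
      unfolding ap_rt by (rule continuous_on_real_root[OF cG])
    show "partial_exists i (\<lambda>x u p q. root 3 (G x u p q)) x u p q" if w: "(x,u,p,q) \<in> W" for i x u p q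
      using dr[OF w] unfolding partial_exists_pdr ap_rt real_differentiable_def by blast
    show "alg W (pdr i (\<lambda>x u p q. root 3 (G x u p q)))" for i
      by (rule alg.cong[OF alg.mul[OF aG alg.mul[OF alg.cst alg.mul[OF alg.inv[OF alg.rt[OF rt.hyps] nzr] alg.inv[OF alg.rt[OF rt.hyps] nzr]]]] agree_sym[OF ag]])
  qed
next
  case (cong F G)
  from cong.IH have cF: "continuous_on W (ap F)"
    and pF: "\<And>i x u p q. (x,u,p,q) \<in> W \<Longrightarrow> partial_exists i F x u p q"
    and aF: "\<And>i. alg W (pdr i F)" unfolding Pstep_def by blast+
  show ?case unfolding Pstep_def
  proof (intro conjI allI impI)
    show "continuous_on W (ap G)"
      using cont_cong[of W F G] cong.hyps(2) cF unfolding ap_split by simp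
    show "partial_exists i G x u p q" if "(x,u,p,q) \<in> W" for i x u p q
      by (rule pe_cong[OF W that cong.hyps(2) pF[OF that]])
    show "alg W (pdr i G)" for i
      by (rule alg.cong[OF aF agree_pdr[OF W cong.hyps(2)]])
  qed
qed

lemma alg_smooth:
  assumes W: "open W" and "alg W F"
  shows "smooth4 W F"
proof -
  have "alg W (iter_pd ds F)" for ds
  proof (induction ds)
    case Nil then show ?case using assms by (simp add: iter_pd_def)
  next
    case (Cons d ds)
    have "iter_pd (d # ds) F = pdr (min d 3) (iter_pd ds F)"
      by (simp add: iter_pd_def pdir_pdr)
    then show ?case using alg_step[OF W Cons] unfolding Pstep_def by simp
  qed
  then show ?thesis
  proof -
    { fix ds
      have "Pstep W (iter_pd ds F)" by (rule alg_step[OF W \<open>alg W (iter_pd ds F)\<close>])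
      then have "continuous_on W (\<lambda>(x,u,p,q). iter_pd ds F x u p q) \<and>
           (\<forall>i<4. \<forall>x u p q. (x,u,p,q) \<in> W \<longrightarrow> partial_exists i (iter_pd ds F) x u p q)"
        unfolding Pstep_def ap_split by blast }
    then show ?thesis unfolding smooth4_def by blast
  qed
qed


lemma clairaut2:
  fixes g ga gb gab gba :: "real \<Rightarrow> real \<Rightarrow> real"
  assumes r: "r > 0"
    and d1: "\<And>s t. \<bar>s - s0\<bar> < r \<Longrightarrow> \<bar>t - t0\<bar> < r \<Longrightarrow> ((\<lambda>s. g s t) has_real_derivative ga s t) (at s)"
    and d2: "\<And>s t. \<bar>s - s0\<bar> < r \<Longrightarrow> \<bar>t - t0\<bar> < r \<Longrightarrow> ((\<lambda>t. g s t) has_real_derivative gb s t) (at t)"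
    and d12: "\<And>s t. \<bar>s - s0\<bar> < r \<Longrightarrow> \<bar>t - t0\<bar> < r \<Longrightarrow> ((\<lambda>t. ga s t) has_real_derivative gab s t) (at t)"
    and d21: "\<And>s t. \<bar>s - s0\<bar> < r \<Longrightarrow> \<bar>t - t0\<bar> < r \<Longrightarrow> ((\<lambda>s. gb s t) has_real_derivative gba s t) (at s)"
    and c12: "isCont (\<lambda>z. gab (fst z) (snd z)) (s0, t0)"
    and c21: "isCont (\<lambda>z. gba (fst z) (snd z)) (s0, t0)"
  shows "gab s0 t0 = gba s0 t0"
proof (rule ccontr)
  assume ne: "gab s0 t0 \<noteq> gba s0 t0"
  define d where "d = \<bar>gab s0 t0 - gba s0 t0\<bar> / 2"
  have dpos: "d > 0" using ne by (simp add: d_def)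
  obtain e1 where e1: "e1 > 0" "\<And>z. dist z (s0,t0) < e1 \<Longrightarrow> dist (gab (fst z) (snd z)) (gab s0 t0) < d"
    using c12[unfolded continuous_at_eps_delta] dpos by fastforce
  obtain e2 where e2: "e2 > 0" "\<And>z. dist z (s0,t0) < e2 \<Longrightarrow> dist (gba (fst z) (snd z)) (gba s0 t0) < d"
    using c21[unfolded continuous_at_eps_delta] dpos by fastforce
  define h where "h = min r (min e1 e2) / 4"
  have hpos: "h > 0" using r e1 e2 by (simp add: h_def)
  have hr: "h < r" using r e1 e2 by (simp add: h_def)
  have close: "dist (a, b) (s0, t0) < min e1 e2" if "\<bar>a - s0\<bar> \<le> h" "\<bar>b - t0\<bar> \<le> h" for a b
  proof -
    have "dist (a, b) (s0, t0) = sqrt ((a - s0)\<^sup>2 + (b - t0)\<^sup>2)"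
      by (simp add: dist_Pair_Pair dist_real_def)
    also have "\<dots> \<le> \<bar>a - s0\<bar> + \<bar>b - t0\<bar>" by (rule sqrt_sum_squares_le_sum_abs)
    also have "\<dots> \<le> 2 * h" using that by simp
    also have "\<dots> < min e1 e2" using r e1 e2 unfolding h_def by linarith
    finally show ?thesis .
  qed
  define D where "D = g (s0+h) (t0+h) - g (s0+h) t0 - g s0 (t0+h) + g s0 t0"
  obtain \<xi> where xi: "s0 < \<xi>" "\<xi> < s0 + h"
    "(g (s0+h) (t0+h) - g (s0+h) t0) - (g s0 (t0+h) - g s0 t0) = (s0 + h - s0) * (ga \<xi> (t0+h) - ga \<xi> t0)"
  proof -
    have "\<exists>z. s0 < z \<and> z < s0 + h \<and> ((\<lambda>s. g s (t0+h) - g s t0) (s0+h) - (\<lambda>s. g s (t0+h) - g s t0) s0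
       = (s0 + h - s0) * (ga z (t0+h) - ga z t0))"
      by (rule MVT2) (use hpos hr in \<open>auto intro!: derivative_eq_intros d1\<close>)
    then show ?thesis using that by auto
  qed
  obtain \<tau> where tau: "t0 < \<tau>" "\<tau> < t0 + h" "ga \<xi> (t0+h) - ga \<xi> t0 = (t0 + h - t0) * gab \<xi> \<tau>"
  proof -
    have "\<exists>z. t0 < z \<and> z < t0 + h \<and> ga \<xi> (t0+h) - ga \<xi> t0 = (t0 + h - t0) * gab \<xi> z"
      by (rule MVT2) (use hpos hr xi in \<open>auto intro!: d12\<close>)
    then show ?thesis using that by auto
  qed
  obtain \<tau>' where tau': "t0 < \<tau>'" "\<tau>' < t0 + h"
    "(g (s0+h) (t0+h) - g s0 (t0+h)) - (g (s0+h) t0 - g s0 t0) = (t0 + h - t0) * (gb (s0+h) \<tau>' - gb s0 \<tau>')"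
  proof -
    have "\<exists>z. t0 < z \<and> z < t0 + h \<and> ((\<lambda>t. g (s0+h) t - g s0 t) (t0+h) - (\<lambda>t. g (s0+h) t - g s0 t) t0
       = (t0 + h - t0) * (gb (s0+h) z - gb s0 z))"
      by (rule MVT2) (use hpos hr in \<open>auto intro!: derivative_eq_intros d2\<close>)
    then show ?thesis using that by auto
  qed
  obtain \<xi>' where xi': "s0 < \<xi>'" "\<xi>' < s0 + h" "gb (s0+h) \<tau>' - gb s0 \<tau>' = (s0 + h - s0) * gba \<xi>' \<tau>'"
  proof -
    have "\<exists>z. s0 < z \<and> z < s0 + h \<and> gb (s0+h) \<tau>' - gb s0 \<tau>' = (s0 + h - s0) * gba z \<tau>'"
      by (rule MVT2) (use hpos hr tau' in \<open>auto intro!: d21\<close>)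
    then show ?thesis using that by auto
  qed
  have "h * (h * gab \<xi> \<tau>) = h * (h * gba \<xi>' \<tau>')"
    using xi(3) tau(3) tau'(3) xi'(3) by (simp add: algebra_simps)
  then have eq: "gab \<xi> \<tau> = gba \<xi>' \<tau>'" using hpos by simp
  have "dist (\<xi>, \<tau>) (s0,t0) < e1" using close[of \<xi> \<tau>] xi tau by simp
  then have a1: "\<bar>gab \<xi> \<tau> - gab s0 t0\<bar> < d" using e1(2)[of "(\<xi>,\<tau>)"] by (simp add: dist_real_def)
  have "dist (\<xi>', \<tau>') (s0,t0) < e2" using close[of \<xi>' \<tau>'] xi' tau' by simp
  then have a2: "\<bar>gba \<xi>' \<tau>' - gba s0 t0\<bar> < d" using e2(2)[of "(\<xi>',\<tau>')"] by (simp add: dist_real_def)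
  have tri: "\<And>A a b::real. \<bar>A - a\<bar> < \<bar>a - b\<bar> / 2 \<Longrightarrow> \<bar>A - b\<bar> < \<bar>a - b\<bar> / 2 \<Longrightarrow> False"
    by (simp add: abs_if split: if_split_asm)
  show False using tri[of "gab \<xi> \<tau>" "gab s0 t0" "gba s0 t0"] a1 a2 eq unfolding d_def by simp
qed

lemma upd_upd_same: "upd i (upd i v s) s' = upd i v s'"
  by (cases v) (simp add: upd_def)
lemma crd_upd_same: "crd i (upd i v s) = s"
  by (cases v) (simp add: upd_def crd_def)
lemma crd_upd_other: "i < 4 \<Longrightarrow> j < 4 \<Longrightarrow> i \<noteq> j \<Longrightarrow> crd i (upd j v t) = crd i v"
  by (cases v) (auto simp: upd_def crd_def)
lemma upd_comm: "i < 4 \<Longrightarrow> j < 4 \<Longrightarrow> i \<noteq> j \<Longrightarrow> upd i (upd j v t) s = upd j (upd i v s) t"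
  by (cases v) (auto simp: upd_def)

lemma ap_pdr: "ap (pdr i G) z = deriv (\<lambda>s. ap G (upd i z s)) (crd i z)"
  by (cases z) (simp add: pdr_def)

lemma alg_DERIV:
  assumes W: "open W" and G: "alg W G" and z: "z \<in> W"
  shows "((\<lambda>s. ap G (upd i z s)) has_real_derivative ap (pdr i G) z) (at (crd i z))"
proof -
  obtain x u p q where zz: "z = (x,u,p,q)" by (cases z) auto
  have "partial_exists i G x u p q" using alg_step[OF W G] z zz unfolding Pstep_def by blast
  then show ?thesis unfolding zz ap_pdr partial_exists_pdr
    by (simp only: DERIV_deriv_iff_real_differentiable)
qed

lemma alg_cont: "open W \<Longrightarrow> alg W G \<Longrightarrow> continuous_on W (ap G)"
  using alg_step unfolding Pstep_def by blast

lemma cont_if2: "continuous_on UNIV (\<lambda>z::real\<times>real. if P then fst z else if Q then snd z else c)"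
  by (cases P; cases Q) (auto intro: continuous_intros)

lemma e_cont:
  shows "continuous_on UNIV (\<lambda>z. upd i (upd j w (snd z)) (fst z))"
proof -
  obtain w1 w2 w3 w4 where ww: "w = (w1,w2,w3,w4)" by (cases w) auto
  have eq: "(\<lambda>z. upd i (upd j w (snd z)) (fst z)) = (\<lambda>z.
     (if i = 0 then fst z else if j = 0 then snd z else w1,
      if i = 1 then fst z else if j = 1 then snd z else w2,
      if i = 2 then fst z else if j = 2 then snd z else w3,
      if 3 \<le> i then fst z else if 3 \<le> j then snd z else w4))"
    by (auto simp: ww upd_def fun_eq_iff)
  show ?thesis unfolding eq
    by (intro continuous_on_Pair cont_if2)
qed

lemma pdr_comm:
  assumes W: "open W" and F: "alg W F" and w: "w \<in> W" and ij: "i < 4" "j < 4"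
  shows "ap (pdr i (pdr j F)) w = ap (pdr j (pdr i F)) w"
proof (cases "i = j")
  case True then show ?thesis by simp
next
  case False
  define e where "e = (\<lambda>s t. upd i (upd j w t) s)"
  define s0 where "s0 = crd i w"
  define t0 where "t0 = crd j w"
  have e0: "e s0 t0 = w" by (simp add: e_def s0_def t0_def)
  have e_alt: "e s t = upd j (upd i w s) t" for s t using upd_comm[OF ij False] by (simp add: e_def)
  have Fi: "alg W (pdr i F)" and Fj: "alg W (pdr j F)" using alg_step[OF W F] unfolding Pstep_def by auto
  have ec: "continuous_on UNIV (\<lambda>z. e (fst z) (snd z))" unfolding e_def by (rule e_cont)
  have "open ((\<lambda>z. e (fst z) (snd z)) -` W)"
    using continuous_on_open_vimage[of UNIV "\<lambda>z. e (fst z) (snd z)"] ec W by auto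
  moreover have "(s0,t0) \<in> (\<lambda>z. e (fst z) (snd z)) -` W" using e0 w by simp
  ultimately obtain r where r: "r > 0" "ball (s0,t0) r \<subseteq> (\<lambda>z. e (fst z) (snd z)) -` W"
    using open_contains_ball by blast
  have inW: "e s t \<in> W" if "\<bar>s - s0\<bar> < r/2" "\<bar>t - t0\<bar> < r/2" for s t
  proof -
    have "dist (s0,t0) (s,t) = sqrt ((s0 - s)\<^sup>2 + (t0 - t)\<^sup>2)" by (simp add: dist_Pair_Pair dist_real_def)
    also have "\<dots> \<le> \<bar>s0 - s\<bar> + \<bar>t0 - t\<bar>" by (rule sqrt_sum_squares_le_sum_abs)
    also have "\<dots> < r" using that by linarith
    finally show ?thesis using r(2) by auto
  qed
  have crd_i: "crd i (e s t) = s" for s t by (simp add: e_def crd_upd_same)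
  have crd_j: "crd j (e s t) = t" for s t by (simp add: e_alt crd_upd_same)
  have line_i: "upd i (e s t) s' = e s' t" for s t s' by (simp add: e_def upd_upd_same)
  have line_j: "upd j (e s t) t' = e s t'" for s t t' by (simp add: e_alt upd_upd_same)
  have Di: "((\<lambda>s. ap G (e s t)) has_real_derivative ap (pdr i G) (e s t)) (at s)"
    if "alg W G" "\<bar>s - s0\<bar> < r/2" "\<bar>t - t0\<bar> < r/2" for G s t
    using alg_DERIV[OF W that(1) inW[OF that(2,3)], of i] by (simp add: line_i crd_i)
  have Dj: "((\<lambda>t. ap G (e s t)) has_real_derivative ap (pdr j G) (e s t)) (at t)"
    if "alg W G" "\<bar>s - s0\<bar> < r/2" "\<bar>t - t0\<bar> < r/2" for G s t
    using alg_DERIV[OF W that(1) inW[OF that(2,3)], of j] by (simp add: line_j crd_j)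
  have cc: "isCont (\<lambda>z. ap G (e (fst z) (snd z))) (s0,t0)" if "alg W G" for G
  proof -
    have "isCont (ap G) (e s0 t0)"
      using alg_cont[OF W that] W w e0 continuous_on_eq_continuous_at by metis
    moreover have "isCont (\<lambda>z. e (fst z) (snd z)) (s0,t0)"
      using ec continuous_on_eq_continuous_at by blast
    ultimately show ?thesis using continuous_at_compose[of "(s0,t0)" "\<lambda>z. e (fst z) (snd z)" "ap G"]
      by (simp add: o_def)
  qed
  have Fij: "alg W (pdr j (pdr i F))" and Fji: "alg W (pdr i (pdr j F))"
    using alg_step[OF W Fi] alg_step[OF W Fj] unfolding Pstep_def by auto
  have "(\<lambda>s t. ap (pdr j (pdr i F)) (e s t)) s0 t0 = (\<lambda>s t. ap (pdr i (pdr j F)) (e s t)) s0 t0"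
    by (rule clairaut2[where g = "\<lambda>s t. ap F (e s t)" and ga = "\<lambda>s t. ap (pdr i F) (e s t)"
          and gb = "\<lambda>s t. ap (pdr j F) (e s t)" and r = "r/2"])
       (use r in \<open>auto intro: Di Dj F Fi Fj cc Fij Fji\<close>)
  then show ?thesis using e0 by simp
qed


lemma Dhat_eq: "Dhat f G = (\<lambda>x u p q. pdr 0 G x u p q + p * pdr (Suc 0) G x u p q + q * pdr 2 G x u p q
     + f x u p q * pdr 3 G x u p q)"
  by (simp add: Dhat_def pdx_pdr pdu_pdr pdp_pdr pdq_pdr)

lemma pdr_cst: "pdr i (\<lambda>x u p q. c) x u p q = 0"
  by (simp add: pdr_def ap_def)

lemma pdr_cx: "pdr i (\<lambda>x u p q. x) x u p q = (if i = 0 then 1 else 0)"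
  by (simp add: pdr_def ap_upd_coords deriv_if_line)

lemma pdr_cu: "pdr i (\<lambda>x u p q. u) x u p q = (if i = 1 then 1 else 0)"
  by (simp add: pdr_def ap_upd_coords deriv_if_line)

lemma pdr_cp: "pdr i (\<lambda>x u p q. p) x u p q = (if i = 2 then 1 else 0)"
  by (simp add: pdr_def ap_upd_coords deriv_if_line)

lemma pdr_cq: "pdr i (\<lambda>x u p q. q) x u p q = (if 3 \<le> i then 1 else 0)"
  by (simp add: pdr_def ap_upd_coords deriv_if_line)

context
  fixes W :: "pt4 set"
  assumes W: "open W"
begin

lemma line_fd:
  assumes "alg W F" "(x,u,p,q) \<in> W"
  shows "(\<lambda>t. ap F (upd i (x,u,p,q) t)) field_differentiable (at (crd i (x,u,p,q)))"
  using alg_DERIV[OF W assms, of i] by (auto simp: field_differentiable_def)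

lemma pdr_add:
  "alg W F \<Longrightarrow> alg W G \<Longrightarrow> (x,u,p,q) \<in> W \<Longrightarrow>
   pdr i (\<lambda>x u p q. F x u p q + G x u p q) x u p q = pdr i F x u p q + pdr i G x u p q"
  unfolding pdr_def ap_add using deriv_add[OF line_fd line_fd] by simp

lemma pdr_diff:
  "alg W F \<Longrightarrow> alg W G \<Longrightarrow> (x,u,p,q) \<in> W \<Longrightarrow>
   pdr i (\<lambda>x u p q. F x u p q - G x u p q) x u p q = pdr i F x u p q - pdr i G x u p q"
proof -
  assume a: "alg W F" "alg W G" "(x,u,p,q) \<in> W"
  have "ap (\<lambda>x u p q. F x u p q - G x u p q) = (\<lambda>w. ap F w - ap G w)" by (auto simp: ap_def)
  then show ?thesis unfolding pdr_def using deriv_diff[OF line_fd[OF a(1,3)] line_fd[OF a(2,3)]] by simp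
qed

lemma pdr_mul:
  "alg W F \<Longrightarrow> alg W G \<Longrightarrow> (x,u,p,q) \<in> W \<Longrightarrow>
   pdr i (\<lambda>x u p q. F x u p q * G x u p q) x u p q = pdr i F x u p q * G x u p q + F x u p q * pdr i G x u p q"
  unfolding pdr_def ap_mul using deriv_mult[OF line_fd line_fd] by simp

lemma pdr_minus:
  "alg W F \<Longrightarrow> (x,u,p,q) \<in> W \<Longrightarrow>
   pdr i (\<lambda>x u p q. - F x u p q) x u p q = - pdr i F x u p q"
proof -
  assume a: "alg W F" "(x,u,p,q) \<in> W"
  have "ap (\<lambda>x u p q. - F x u p q) = (\<lambda>w. - ap F w)" by (auto simp: ap_def)
  then show ?thesis unfolding pdr_def using deriv_minus[OF line_fd[OF a]] by simp
qed



lemma alg_pdr: "alg W F \<Longrightarrow> alg W (pdr i F)"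
  using alg_step[OF W] unfolding Pstep_def by blast

lemma alg_diff: "alg W F \<Longrightarrow> alg W G \<Longrightarrow> alg W (\<lambda>x u p q. F x u p q - G x u p q)"
proof -
  assume "alg W F" "alg W G"
  then have "alg W (\<lambda>x u p q. F x u p q + (\<lambda>x u p q. -1) x u p q * G x u p q)"
    by (intro alg.add alg.mul alg.cst)
  then show ?thesis by (rule alg.cong) (auto simp: agree_def)
qed

lemma alg_minus: "alg W F \<Longrightarrow> alg W (\<lambda>x u p q. - F x u p q)"
proof -
  assume "alg W F"
  then have "alg W (\<lambda>x u p q. (\<lambda>x u p q. -1) x u p q * F x u p q)"
    by (intro alg.mul alg.cst)
  then show ?thesis by (rule alg.cong) (auto simp: agree_def)
qed


lemma alg_Dhat: "alg W f \<Longrightarrow> alg W G \<Longrightarrow> alg W (Dhat f G)"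
  unfolding Dhat_eq
  by (intro alg.add alg.mul alg_pdr alg.cp alg.cq)

lemma Dhat_add:
  "alg W F \<Longrightarrow> alg W G \<Longrightarrow> (x,u,p,q) \<in> W \<Longrightarrow>
   Dhat f (\<lambda>x u p q. F x u p q + G x u p q) x u p q = Dhat f F x u p q + Dhat f G x u p q"
  unfolding Dhat_eq by (simp add: pdr_add algebra_simps)

lemma Dhat_diff:
  "alg W F \<Longrightarrow> alg W G \<Longrightarrow> (x,u,p,q) \<in> W \<Longrightarrow>
   Dhat f (\<lambda>x u p q. F x u p q - G x u p q) x u p q = Dhat f F x u p q - Dhat f G x u p q"
  unfolding Dhat_eq by (simp add: pdr_diff algebra_simps)

lemma Dhat_mul:
  "alg W F \<Longrightarrow> alg W G \<Longrightarrow> (x,u,p,q) \<in> W \<Longrightarrow>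
   Dhat f (\<lambda>x u p q. F x u p q * G x u p q) x u p q = Dhat f F x u p q * G x u p q + F x u p q * Dhat f G x u p q"
  unfolding Dhat_eq by (simp add: pdr_mul algebra_simps)

lemma Dhat_minus:
  "alg W F \<Longrightarrow> (x,u,p,q) \<in> W \<Longrightarrow>
   Dhat f (\<lambda>x u p q. - F x u p q) x u p q = - Dhat f F x u p q"
  unfolding Dhat_eq by (simp add: pdr_minus algebra_simps)


lemma pdr_comm_pt:
  "alg W F \<Longrightarrow> (x,u,p,q) \<in> W \<Longrightarrow> i < 4 \<Longrightarrow> j < 4 \<Longrightarrow> pdr i (pdr j F) x u p q = pdr j (pdr i F) x u p q"
  using pdr_comm[OF W, of F "(x,u,p,q)" i j] by simp

lemma comm_gen:
  assumes f: "alg W f" and G: "alg W G" and w: "(x,u,p,q) \<in> W" and k: "k < 4"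
  shows "pdr k (Dhat f G) x u p q = Dhat f (pdr k G) x u p q
     + (if k = 1 then 0 else if k = 2 then pdr (Suc 0) G x u p q else if k = 3 then pdr 2 G x u p q else 0)
     + pdr k f x u p q * pdr 3 G x u p q"
proof -
  have a: "alg W (pdr i G)" for i using alg_pdr[OF G] .
  have s: "pdr k (pdr i G) x u p q = pdr i (pdr k G) x u p q" if "i < 4" for i
    using pdr_comm_pt[OF G w k that] .
  have "pdr k (Dhat f G) x u p q = pdr k (pdr 0 G) x u p q + (pdr k (\<lambda>x u p q. p) x u p q * pdr (Suc 0) G x u p q + p * pdr k (pdr (Suc 0) G) x u p q)
      + (pdr k (\<lambda>x u p q. q) x u p q * pdr 2 G x u p q + q * pdr k (pdr 2 G) x u p q)
      + (pdr k f x u p q * pdr 3 G x u p q + f x u p q * pdr k (pdr 3 G) x u p q)"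
    unfolding Dhat_eq
    by (simp add: pdr_add pdr_mul a f w alg.add alg.mul alg.cp alg.cq del: pdr_cp pdr_cq)
  also have "\<dots> = Dhat f (pdr k G) x u p q
     + (if k = 1 then 0 else if k = 2 then pdr (Suc 0) G x u p q else if k = 3 then pdr 2 G x u p q else 0)
     + pdr k f x u p q * pdr 3 G x u p q"
    unfolding Dhat_eq using k by (auto simp: s pdr_cp pdr_cq)
  finally show ?thesis .
qed

lemma comm_q: "alg W f \<Longrightarrow> alg W G \<Longrightarrow> (x,u,p,q) \<in> W \<Longrightarrow>
  pdr 3 (Dhat f G) x u p q = Dhat f (pdr 3 G) x u p q + pdr 2 G x u p q + pdr 3 f x u p q * pdr 3 G x u p q"
  using comm_gen[of f G x u p q 3] by simp
lemma comm_p: "alg W f \<Longrightarrow> alg W G \<Longrightarrow> (x,u,p,q) \<in> W \<Longrightarrow>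
  pdr 2 (Dhat f G) x u p q = Dhat f (pdr 2 G) x u p q + pdr (Suc 0) G x u p q + pdr 2 f x u p q * pdr 3 G x u p q"
  using comm_gen[of f G x u p q 2] by simp
lemma comm_u: "alg W f \<Longrightarrow> alg W G \<Longrightarrow> (x,u,p,q) \<in> W \<Longrightarrow>
  pdr (Suc 0) (Dhat f G) x u p q = Dhat f (pdr (Suc 0) G) x u p q + pdr (Suc 0) f x u p q * pdr 3 G x u p q"
  using comm_gen[of f G x u p q 1] by simp

lemma Dhat_cong: "agree W F G \<Longrightarrow> (x,u,p,q) \<in> W \<Longrightarrow> Dhat f F x u p q = Dhat f G x u p q"
  unfolding Dhat_eq using pdr_cong[OF W] by simp

lemma pdr_cong': "agree W F G \<Longrightarrow> (x,u,p,q) \<in> W \<Longrightarrow> pdr i F x u p q = pdr i G x u p q"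
  using pdr_cong[OF W] by blast


end

lemma Dhat_cst: "Dhat f (\<lambda>x u p q. c) x u p q = 0"
  unfolding Dhat_eq by (simp add: pdr_cst)

definition qfree :: "fn4 \<Rightarrow> bool" where
  "qfree F \<longleftrightarrow> (\<forall>x u p q q'. F x u p q = F x u p q')"

lemma qfree_pdq: "qfree F \<Longrightarrow> pdr 3 F x u p q = 0"
proof -
  assume "qfree F"
  then have "(\<lambda>t. ap F (upd 3 (x,u,p,q) t)) = (\<lambda>t. F x u p q)"
    unfolding qfree_def by (auto simp: upd_def fun_eq_iff)
  then show ?thesis by (simp add: pdr_def)
qed

lemma qfree_pdr: "qfree F \<Longrightarrow> i < 3 \<Longrightarrow> qfree (pdr i F)"
proof -
  assume F: "qfree F" and i: "i < 3"
  have "(\<lambda>t. ap F (upd i (x,u,p,q) t)) = (\<lambda>t. ap F (upd i (x,u,p,q') t))" for x u p q q'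
    using F i unfolding qfree_def by (auto simp: upd_def fun_eq_iff)
  moreover have "crd i (x,u,p,q) = crd i (x,u,p,q')" for x u p q q' using i by (simp add: crd_def)
  ultimately show ?thesis unfolding qfree_def pdr_def by metis
qed

lemma qfree_lift3 [simp]: "qfree (lift3 h)" by (simp add: qfree_def lift3_def)
lemma qfree_add: "qfree F \<Longrightarrow> qfree G \<Longrightarrow> qfree (\<lambda>x u p q. F x u p q + G x u p q)"
  unfolding qfree_def by metis
lemma qfree_diff: "qfree F \<Longrightarrow> qfree G \<Longrightarrow> qfree (\<lambda>x u p q. F x u p q - G x u p q)"
  unfolding qfree_def by metis
lemma qfree_mul: "qfree F \<Longrightarrow> qfree G \<Longrightarrow> qfree (\<lambda>x u p q. F x u p q * G x u p q)"
  unfolding qfree_def by metis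
lemma qfree_inv: "qfree F \<Longrightarrow> qfree (\<lambda>x u p q. inverse (F x u p q))"
  unfolding qfree_def by metis
lemma qfree_cst: "qfree (\<lambda>x u p q. c)" unfolding qfree_def by simp


lemma solve: "(kk::real) \<noteq> 0 \<Longrightarrow> yy * kk = rr \<Longrightarrow> yy = rr / kk"
  by (simp add: field_simps)

lemma pdr_inv:
  "open W \<Longrightarrow> alg W G \<Longrightarrow> (x,u,p,q) \<in> W \<Longrightarrow> G x u p q \<noteq> 0 \<Longrightarrow>
   pdr i (\<lambda>x u p q. inverse (G x u p q)) x u p q = - pdr i G x u p q * (inverse (G x u p q) * inverse (G x u p q))"
proof -
  assume a: "open W" "alg W G" "(x,u,p,q) \<in> W" "G x u p q \<noteq> 0"
  have nz: "ap G (upd i (x,u,p,q) (crd i (x,u,p,q))) \<noteq> 0" using a(4) by simp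
  show ?thesis unfolding pdr_def ap_inv using deriv_inverse[OF line_fd[OF a(1,2,3)] nz]
    by (simp add: power2_eq_square divide_inverse)
qed

lemma pdr_inv':
  "open W \<Longrightarrow> alg W G \<Longrightarrow> (x,u,p,q) \<in> W \<Longrightarrow> G x u p q \<noteq> 0 \<Longrightarrow> H = (\<lambda>x u p q. inverse (G x u p q)) \<Longrightarrow>
   pdr i H x u p q = - pdr i G x u p q * (H x u p q * H x u p q)"
  using pdr_inv by simp

lemma Dhat_inv:
  "open W \<Longrightarrow> alg W G \<Longrightarrow> (x,u,p,q) \<in> W \<Longrightarrow> G x u p q \<noteq> 0 \<Longrightarrow>
   Dhat f (\<lambda>x u p q. inverse (G x u p q)) x u p q = - Dhat f G x u p q * (inverse (G x u p q) * inverse (G x u p q))"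
  unfolding Dhat_eq by (simp add: pdr_inv algebra_simps)

context
  fixes W :: "pt4 set" and f :: fn4 and s :: real and phi psi chi :: fn3
  assumes W: "open W"
    and fs: "smooth4 W f"
    and CE: "contact_equiv_on W f s phi psi chi"
begin

private definition "Ph = lift3 phi"
private definition "Ps = lift3 psi"
private definition "Ch = lift3 chi"
private definition "E = eta_of f phi chi"
private definition "F = Dhat f Ph"
private definition "a = pdr (Suc 0) Ph"
private definition "b = pdr 2 Ph"
private definition "A = (\<lambda>x u p q. pdr (Suc 0) Ps x u p q - Ch x u p q * a x u p q)"
private definition "c = pdr (Suc 0) Ch"
private definition "m = (\<lambda>x u p q. c x u p q - E x u p q * a x u p q)"
private definition "g = pdr (Suc 0) E"
private definition "e = pdr 2 E"
private definition "h = pdr (Suc 0) A"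
private definition "iF = (\<lambda>x u p q. inverse (F x u p q))"
private definition "iA = (\<lambda>x u p q. inverse (A x u p q))"
private definition "fb = (\<lambda>x u p q. s * Ch x u p q + Ps x u p q)"
private definition "F2 = Dhat f F"
private definition "F3 = Dhat f F2"
private definition "a1 = Dhat f a"
private definition "b1 = Dhat f b"
private definition "g1 = Dhat f g"
private definition "pa = pdr 2 a"
private definition "DX = Dhat f Ch"

lemma sm_phi: "smooth4 W (lift3 phi)" and sm_psi: "smooth4 W (lift3 psi)" and sm_chi: "smooth4 W (lift3 chi)"
  using CE unfolding contact_equiv_on_def by auto

lemma F_nz: "(x,u,p,q) \<in> W \<Longrightarrow> F x u p q \<noteq> 0"
  using CE unfolding contact_equiv_on_def F_def Ph_def by auto

lemma eqn: "(x,u,p,q) \<in> W \<Longrightarrow> Dhat f E x u p q = fb x u p q * F x u p q"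
  using CE unfolding contact_equiv_on_def F_def Ph_def E_def fb_def Ch_def Ps_def by (auto simp: lift3_def)

lemma jac_nz: "(x,u,p,q) \<in> W \<Longrightarrow> jac3 phi psi chi x u p \<noteq> 0"
  using CE unfolding contact_equiv_on_def by auto

lemma alg_f: "alg W f" using alg.sm[OF fs] .
lemma alg_Ph: "alg W Ph" unfolding Ph_def using alg.sm[OF sm_phi] .
lemma alg_Ps: "alg W Ps" unfolding Ps_def using alg.sm[OF sm_psi] .
lemma alg_Ch: "alg W Ch" unfolding Ch_def using alg.sm[OF sm_chi] .
lemma alg_F: "alg W F" unfolding F_def by (rule alg_Dhat[OF W alg_f alg_Ph])
lemma alg_a: "alg W a" unfolding a_def by (rule alg_pdr[OF W alg_Ph])
lemma alg_b: "alg W b" unfolding b_def by (rule alg_pdr[OF W alg_Ph])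
lemma alg_c: "alg W c" unfolding c_def by (rule alg_pdr[OF W alg_Ch])
lemma alg_A: "alg W A" unfolding A_def
  by (rule alg_diff[OF W alg_pdr[OF W alg_Ps] alg.mul[OF alg_Ch alg_a]])
lemma alg_DX: "alg W DX" unfolding DX_def by (rule alg_Dhat[OF W alg_f alg_Ch])
lemma alg_iF: "alg W iF" unfolding iF_def using alg.inv[OF alg_F] F_nz by blast
lemma E_eq: "E = (\<lambda>x u p q. DX x u p q * iF x u p q)"
  by (simp add: E_def eta_of_def DX_def iF_def F_def Ph_def Ch_def divide_inverse fun_eq_iff)
lemma alg_E: "alg W E" unfolding E_eq by (rule alg.mul[OF alg_DX alg_iF])
lemma alg_m: "alg W m" unfolding m_def by (rule alg_diff[OF W alg_c alg.mul[OF alg_E alg_a]])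
lemma alg_g: "alg W g" unfolding g_def by (rule alg_pdr[OF W alg_E])
lemma alg_e: "alg W e" unfolding e_def by (rule alg_pdr[OF W alg_E])
lemma alg_h: "alg W h" unfolding h_def by (rule alg_pdr[OF W alg_A])
lemma alg_fb: "alg W fb" unfolding fb_def by (rule alg.add[OF alg.mul[OF alg.cst alg_Ch] alg_Ps])
lemma alg_F2: "alg W F2" unfolding F2_def by (rule alg_Dhat[OF W alg_f alg_F])
lemma alg_F3: "alg W F3" unfolding F3_def by (rule alg_Dhat[OF W alg_f alg_F2])
lemma alg_a1: "alg W a1" unfolding a1_def by (rule alg_Dhat[OF W alg_f alg_a])
lemma alg_b1: "alg W b1" unfolding b1_def by (rule alg_Dhat[OF W alg_f alg_b])
lemma alg_g1: "alg W g1" unfolding g1_def by (rule alg_Dhat[OF W alg_f alg_g])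
lemma alg_pa: "alg W pa" unfolding pa_def by (rule alg_pdr[OF W alg_a])

lemmas algs = alg_f alg_Ph alg_Ps alg_Ch alg_F alg_a alg_b alg_c alg_A alg_DX alg_iF alg_E alg_m
  alg_g alg_e alg_h alg_fb alg_F2 alg_F3 alg_a1 alg_b1 alg_g1 alg_pa

lemma qf_Ph: "qfree Ph" and qf_Ps: "qfree Ps" and qf_Ch: "qfree Ch"
  by (simp_all add: Ph_def Ps_def Ch_def)
lemma qf_a: "qfree a" and qf_b: "qfree b" and qf_c: "qfree c"
  by (simp_all add: a_def b_def c_def qfree_pdr qf_Ph qf_Ch)
lemma qf_A: "qfree A" unfolding A_def
  by (rule qfree_diff[OF qfree_pdr[OF qf_Ps] qfree_mul[OF qf_Ch qf_a]]) simp
lemma qf_fb: "qfree fb" unfolding fb_def by (rule qfree_add[OF qfree_mul[OF qfree_cst qf_Ch] qf_Ps])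
lemma qf_iA: "qfree iA" unfolding iA_def by (rule qfree_inv[OF qf_A])

lemma pq0: "pdr 3 Ph x u p q = 0" "pdr 3 Ps x u p q = 0" "pdr 3 Ch x u p q = 0"
  "pdr 3 a x u p q = 0" "pdr 3 b x u p q = 0" "pdr 3 c x u p q = 0" "pdr 3 A x u p q = 0"
  "pdr 3 fb x u p q = 0" "pdr 3 iA x u p q = 0"
  using qfree_pdq qf_Ph qf_Ps qf_Ch qf_a qf_b qf_c qf_A qf_fb qf_iA by blast+

lemma pq0f: "pdr 3 Ph = (\<lambda>x u p q. 0)" "pdr 3 Ch = (\<lambda>x u p q. 0)" "pdr 3 Ps = (\<lambda>x u p q. 0)"
  using pq0 by (auto simp: fun_eq_iff)

lemma A_eq: "pdr (Suc 0) Ps = (\<lambda>x u p q. Ch x u p q * a x u p q + A x u p q)"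
  by (simp add: A_def fun_eq_iff)

lemma contact:
  assumes w: "(x,u,p,q) \<in> W"
  shows "pdr 0 Ps x u p q = Ch x u p q * pdr 0 Ph x u p q - p * A x u p q"
    "pdr 2 Ps x u p q = Ch x u p q * b x u p q"
proof -
  obtain lam where L: "\<forall>x u p q. (x,u,p,q) \<in> W \<longrightarrow>
      pdx (lift3 psi) x u p q - chi x u p * pdx (lift3 phi) x u p q = - p * lam x u p \<and>
      pdu (lift3 psi) x u p q - chi x u p * pdu (lift3 phi) x u p q = lam x u p \<and>
      pdp (lift3 psi) x u p q - chi x u p * pdp (lift3 phi) x u p q = 0"
    using CE unfolding contact_equiv_on_def is_contact_on_def by blast
  have Ch: "Ch x u p q = chi x u p" by (simp add: Ch_def lift3_def)
  from L w have "A x u p q = lam x u p"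
    by (simp add: A_def Ch a_def Ph_def Ps_def pdu_pdr)
  with L w show "pdr 0 Ps x u p q = Ch x u p q * pdr 0 Ph x u p q - p * A x u p q"
    by (simp add: Ch Ph_def Ps_def pdx_pdr algebra_simps)
  from L w show "pdr 2 Ps x u p q = Ch x u p q * b x u p q"
    by (simp add: Ch Ph_def Ps_def b_def pdp_pdr algebra_simps)
qed

lemma agree_p2Ps: "agree W (pdr 2 Ps) (\<lambda>x u p q. Ch x u p q * b x u p q)"
  using contact(2) by (auto simp: agree_def)
lemma agree_p0Ps: "agree W (pdr 0 Ps) (\<lambda>x u p q. Ch x u p q * pdr 0 Ph x u p q - p * A x u p q)"
  using contact(1) by (auto simp: agree_def)

lemma F_expl: "F x u p q = pdr 0 Ph x u p q + p * a x u p q + q * b x u p q"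
  unfolding F_def Dhat_eq a_def b_def by (simp add: pq0)
lemma DX_expl: "DX x u p q = pdr 0 Ch x u p q + p * c x u p q + q * pdr 2 Ch x u p q"
  unfolding DX_def Dhat_eq c_def by (simp add: pq0)
lemma DPs: "(x,u,p,q) \<in> W \<Longrightarrow> Dhat f Ps x u p q = Ch x u p q * F x u p q"
  using contact[of x u p q] by (simp add: Dhat_eq F_expl A_eq pq0 algebra_simps)

lemma D1: "(x,u,p,q) \<in> W \<Longrightarrow> pdr 3 F x u p q = b x u p q"
  using comm_q[OF W alg_f alg_Ph] by (simp add: F_def[symmetric] pq0f Dhat_cst b_def pq0)
lemma D2: "(x,u,p,q) \<in> W \<Longrightarrow> pdr (Suc 0) F x u p q = a1 x u p q"
  using comm_u[OF W alg_f alg_Ph] by (simp add: F_def[symmetric] a1_def a_def pq0)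
lemma D3: "(x,u,p,q) \<in> W \<Longrightarrow> pdr 2 F x u p q = b1 x u p q + a x u p q"
  using comm_p[OF W alg_f alg_Ph] by (simp add: F_def[symmetric] b1_def b_def a_def pq0)

lemma D6a: "(x,u,p,q) \<in> W \<Longrightarrow> pdr (Suc 0) b x u p q = pa x u p q"
  unfolding pa_def a_def b_def using pdr_comm_pt[OF W alg_Ph, of x u p q 1 2] by simp

lemma D6b: assumes w: "(x,u,p,q) \<in> W"
  shows "pdr 2 A x u p q = c x u p q * b x u p q - pdr 2 Ch x u p q * a x u p q"
proof -
  have "pdr 2 (pdr (Suc 0) Ps) x u p q = pdr (Suc 0) (pdr 2 Ps) x u p q"
    using pdr_comm_pt[OF W alg_Ps w, of 2 1] by simp
  also have "\<dots> = pdr (Suc 0) (\<lambda>x u p q. Ch x u p q * b x u p q) x u p q"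
    by (rule pdr_cong'[OF W agree_p2Ps w])
  finally have 1: "pdr 2 (pdr (Suc 0) Ps) x u p q = c x u p q * b x u p q + Ch x u p q * pa x u p q"
    using w by (simp add: pdr_mul[OF W] alg_Ch alg_b c_def D6a)
  have "pdr 2 A x u p q = pdr 2 (pdr (Suc 0) Ps) x u p q - (pdr 2 Ch x u p q * a x u p q + Ch x u p q * pa x u p q)"
    unfolding A_def using w
    by (simp add: pdr_diff[OF W] pdr_mul[OF W] alg_pdr[OF W] algs alg.mul pa_def)
  then show ?thesis using 1 by simp
qed

lemma D6c: assumes w: "(x,u,p,q) \<in> W"
  shows "A x u p q = pdr 2 Ch x u p q * pdr 0 Ph x u p q - pdr 0 Ch x u p q * b x u p q
     - p * (c x u p q * b x u p q - pdr 2 Ch x u p q * a x u p q)"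
proof -
  have "pdr 2 (pdr 0 Ps) x u p q = pdr 0 (pdr 2 Ps) x u p q"
    using pdr_comm_pt[OF W alg_Ps w, of 2 0] by simp
  also have "\<dots> = pdr 0 (\<lambda>x u p q. Ch x u p q * b x u p q) x u p q"
    by (rule pdr_cong'[OF W agree_p2Ps w])
  finally have 1: "pdr 2 (pdr 0 Ps) x u p q = pdr 0 Ch x u p q * b x u p q + Ch x u p q * pdr 0 b x u p q"
    using w by (simp add: pdr_mul[OF W] alg_Ch alg_b)
  have "pdr 2 (pdr 0 Ps) x u p q = pdr 2 (\<lambda>x u p q. Ch x u p q * pdr 0 Ph x u p q - p * A x u p q) x u p q"
    by (rule pdr_cong'[OF W agree_p0Ps w])
  also have "\<dots> = pdr 2 Ch x u p q * pdr 0 Ph x u p q + Ch x u p q * pdr 2 (pdr 0 Ph) x u p q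
       - (A x u p q + p * pdr 2 A x u p q)"
    using w by (simp add: pdr_diff[OF W] pdr_mul[OF W] alg_pdr[OF W] algs alg.mul alg.cp pdr_cp)
  also have "pdr 2 (pdr 0 Ph) x u p q = pdr 0 b x u p q"
    using pdr_comm_pt[OF W alg_Ph w, of 2 0] by (simp add: b_def)
  finally show ?thesis using 1 D6b[OF w] by (simp add: algebra_simps)
qed


lemma q0: "qfree G \<Longrightarrow> G x u p 0 = G x u p q"
  unfolding qfree_def by metis

lemma jac_eq: assumes w: "(x,u,p,q) \<in> W"
  shows "jac3 phi psi chi x u p = A x u p q * A x u p q"
proof -
  have qP: "qfree (pdr i Ph)" "qfree (pdr i Ps)" "qfree (pdr i Ch)" if "i < 3" for i
    using qfree_pdr[OF qf_Ph that] qfree_pdr[OF qf_Ps that] qfree_pdr[OF qf_Ch that] by auto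
  have e1: "pdx (lift3 phi) x u p 0 = pdr 0 Ph x u p q" "pdu (lift3 phi) x u p 0 = a x u p q"
    "pdp (lift3 phi) x u p 0 = b x u p q"
    "pdx (lift3 psi) x u p 0 = pdr 0 Ps x u p q" "pdu (lift3 psi) x u p 0 = pdr (Suc 0) Ps x u p q"
    "pdp (lift3 psi) x u p 0 = pdr 2 Ps x u p q"
    "pdx (lift3 chi) x u p 0 = pdr 0 Ch x u p q" "pdu (lift3 chi) x u p 0 = c x u p q"
    "pdp (lift3 chi) x u p 0 = pdr 2 Ch x u p q"
    using q0[OF qP(1), of 0] q0[OF qP(1), of 1] q0[OF qP(1), of 2]
      q0[OF qP(2), of 0] q0[OF qP(2), of 1] q0[OF qP(2), of 2]
      q0[OF qP(3), of 0] q0[OF qP(3), of 1] q0[OF qP(3), of 2]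
    by (simp_all add: pdx_pdr pdu_pdr pdp_pdr Ph_def Ps_def Ch_def a_def b_def c_def)
  have "jac3 phi psi chi x u p = A x u p q * (pdr 2 Ch x u p q * pdr 0 Ph x u p q - pdr 0 Ch x u p q * b x u p q
     - p * (c x u p q * b x u p q - pdr 2 Ch x u p q * a x u p q))"
    unfolding jac3_def Let_def e1 contact[OF w] A_eq by algebra
  also have "\<dots> = A x u p q * A x u p q" using D6c[OF w] by simp
  finally show ?thesis .
qed

lemma A_nz: "(x,u,p,q) \<in> W \<Longrightarrow> A x u p q \<noteq> 0"
  using jac_eq jac_nz by fastforce

lemma alg_iA: "alg W iA" unfolding iA_def using alg.inv[OF alg_A] A_nz by blast

lemmas ds = pdr_add[OF W] pdr_diff[OF W] pdr_mul[OF W] pdr_minus[OF W] Dhat_add[OF W] Dhat_diff[OF W]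
  Dhat_mul[OF W] Dhat_minus[OF W] pdr_cst Dhat_cst algs alg_iA alg.add alg.mul alg_diff[OF W] alg_minus[OF W] alg.cst

lemma iF_nz: "(x,u,p,q) \<in> W \<Longrightarrow> F x u p q * iF x u p q = 1"
  using F_nz by (simp add: iF_def)
lemma iA_nz: "(x,u,p,q) \<in> W \<Longrightarrow> A x u p q * iA x u p q = 1"
  using A_nz by (simp add: iA_def)

lemma d_iF: assumes w: "(x,u,p,q) \<in> W"
  shows "pdr i iF x u p q = - pdr i F x u p q * (iF x u p q * iF x u p q)"
    "Dhat f iF x u p q = - F2 x u p q * (iF x u p q * iF x u p q)"
proof -
  have nz: "F x u p q \<noteq> 0" using F_nz[OF w] .
  have t1: "alg W F" by (rule alg_F)
  show "pdr i iF x u p q = - pdr i F x u p q * (iF x u p q * iF x u p q)"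
    unfolding iF_def using W t1 w nz by (rule pdr_inv)
  show "Dhat f iF x u p q = - F2 x u p q * (iF x u p q * iF x u p q)"
    unfolding iF_def F2_def using W t1 w nz by (rule Dhat_inv)
qed

lemma D7: assumes w: "(x,u,p,q) \<in> W"
  shows "pdr 3 E x u p q = A x u p q * (iF x u p q * iF x u p q)"
proof -
  have pDX: "pdr 3 DX x u p q = pdr 2 Ch x u p q"
    using comm_q[OF W alg_f alg_Ch w] by (simp add: DX_def[symmetric] pq0f Dhat_cst pq0)
  have key: "pdr 2 Ch x u p q * F x u p q - DX x u p q * b x u p q = A x u p q"
    using D6c[OF w] by (simp add: F_expl DX_expl algebra_simps)
  have "pdr 3 E x u p q = pdr 2 Ch x u p q * iF x u p q - DX x u p q * (b x u p q * (iF x u p q * iF x u p q))"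
    unfolding E_eq using w by (simp add: ds pDX d_iF D1)
  also have "\<dots> = (pdr 2 Ch x u p q * F x u p q - DX x u p q * b x u p q) * (iF x u p q * iF x u p q)"
    using iF_nz[OF w] by algebra
  finally show ?thesis using key by simp
qed

lemma D8: "(x,u,p,q) \<in> W \<Longrightarrow> DX x u p q = E x u p q * F x u p q"
  using F_nz by (simp add: E_eq iF_def)

lemma D9: assumes w: "(x,u,p,q) \<in> W"
  shows "pdr 2 Ch x u p q = A x u p q * iF x u p q + E x u p q * b x u p q"
proof -
  have key: "pdr 2 Ch x u p q * F x u p q - DX x u p q * b x u p q = A x u p q"
    using D6c[OF w] by (simp add: F_expl DX_expl algebra_simps)
  then have "pdr 2 Ch x u p q * F x u p q = A x u p q + E x u p q * b x u p q * F x u p q"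
    using D8[OF w] by (simp add: algebra_simps)
  then show ?thesis using F_nz[OF w] by (simp add: iF_def field_simps)
qed

lemma DPs_ag: "agree W (Dhat f Ps) (\<lambda>x u p q. Ch x u p q * F x u p q)"
  using DPs by (auto simp: agree_def)
lemma DX_ag: "agree W DX (\<lambda>x u p q. E x u p q * F x u p q)"
  using D8 by (auto simp: agree_def)
lemma p2Ch_ag: "agree W (pdr 2 Ch) (\<lambda>x u p q. A x u p q * iF x u p q + E x u p q * b x u p q)"
  using D9 by (auto simp: agree_def)
lemma DE_ag: "agree W (Dhat f E) (\<lambda>x u p q. fb x u p q * F x u p q)"
  using eqn by (auto simp: agree_def)
lemma p3E_ag: "agree W (pdr 3 E) (\<lambda>x u p q. A x u p q * (iF x u p q * iF x u p q))"
  using D7 by (auto simp: agree_def)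

lemma D10: assumes w: "(x,u,p,q) \<in> W"
  shows "Dhat f A x u p q = F x u p q * m x u p q"
proof -
  have "pdr (Suc 0) (Dhat f Ps) x u p q = Dhat f (pdr (Suc 0) Ps) x u p q"
    using comm_u[OF W alg_f alg_Ps w] by (simp add: pq0)
  moreover have "pdr (Suc 0) (Dhat f Ps) x u p q = c x u p q * F x u p q + Ch x u p q * a1 x u p q"
    using pdr_cong'[OF W DPs_ag w] w by (simp add: ds D2 c_def)
  moreover have "Dhat f (pdr (Suc 0) Ps) x u p q = E x u p q * F x u p q * a x u p q + Ch x u p q * a1 x u p q
      + Dhat f A x u p q"
    unfolding A_eq using w D8[OF w] by (simp add: ds a1_def DX_def[symmetric])
  ultimately show ?thesis by (simp add: m_def algebra_simps)
qed

lemma D11: assumes w: "(x,u,p,q) \<in> W"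
  shows "pdr 2 A x u p q = m x u p q * b x u p q - A x u p q * a x u p q * iF x u p q"
  using D6b[OF w] D9[OF w] by (simp add: m_def algebra_simps)

lemma DF: "Dhat f F = F2" by (simp add: F2_def)
lemma Dha: "Dhat f a = a1" by (simp add: a1_def)
lemma Dhb: "Dhat f b = b1" by (simp add: b1_def)

lemma D12: assumes w: "(x,u,p,q) \<in> W"
  shows "e x u p q = 2 * m x u p q * iF x u p q - A x u p q * F2 x u p q * (iF x u p q * iF x u p q * iF x u p q)
     + fb x u p q * b x u p q"
proof -
  have 1: "pdr 2 (Dhat f Ch) x u p q = Dhat f (pdr 2 Ch) x u p q + c x u p q"
    using comm_p[OF W alg_f alg_Ch w] by (simp add: pq0 c_def)
  have 2: "pdr 2 (Dhat f Ch) x u p q = e x u p q * F x u p q + E x u p q * (b1 x u p q + a x u p q)"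
    using pdr_cong'[OF W DX_ag w] w by (simp add: ds D3 e_def DX_def[symmetric])
  have 3: "Dhat f (pdr 2 Ch) x u p q = F x u p q * m x u p q * iF x u p q
      - A x u p q * (F2 x u p q * (iF x u p q * iF x u p q)) + fb x u p q * F x u p q * b x u p q + E x u p q * b1 x u p q"
    using Dhat_cong[OF W p2Ch_ag w] w by (simp add: ds D10 d_iF eqn Dhb)
  have mm: "m x u p q = c x u p q - E x u p q * a x u p q" by (simp add: m_def)
  show ?thesis using 1 2 3 iF_nz[OF w] mm by algebra
qed




lemma iFv: "(x,u,p,q) \<in> W \<Longrightarrow> iF x u p q = 1 / F x u p q" by (simp add: iF_def divide_inverse)
lemma iAv: "(x,u,p,q) \<in> W \<Longrightarrow> iA x u p q = 1 / A x u p q" by (simp add: iA_def divide_inverse)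

lemma d_iA: assumes w: "(x,u,p,q) \<in> W"
  shows "Dhat f iA x u p q = - (F x u p q * m x u p q) * (iA x u p q * iA x u p q)"
    "pdr i iA x u p q = - pdr i A x u p q * (iA x u p q * iA x u p q)"
proof -
  have nz: "A x u p q \<noteq> 0" using A_nz[OF w] .
  have t1: "alg W A" by (rule alg_A)
  have 1: "Dhat f iA x u p q = - Dhat f A x u p q * (iA x u p q * iA x u p q)"
    unfolding iA_def using W t1 w nz by (rule Dhat_inv)
  have d: "Dhat f A x u p q = F x u p q * m x u p q" using D10[OF w] .
  show "Dhat f iA x u p q = - (F x u p q * m x u p q) * (iA x u p q * iA x u p q)"
    unfolding 1 d by (rule refl)
  show "pdr i iA x u p q = - pdr i A x u p q * (iA x u p q * iA x u p q)"
    unfolding iA_def using W t1 w nz by (rule pdr_inv)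
qed

lemma e_ag: "agree W e (\<lambda>x u p q. 2 * m x u p q * iF x u p q - A x u p q * F2 x u p q * (iF x u p q * iF x u p q * iF x u p q)
     + fb x u p q * b x u p q)"
  using D12 by (auto simp: agree_def)

lemma Dfb: "(x,u,p,q) \<in> W \<Longrightarrow> Dhat f fb x u p q = s * (E x u p q * F x u p q) + Ch x u p q * F x u p q"
  unfolding fb_def by (simp add: ds DX_def[symmetric] D8 DPs)
lemma pfb: "(x,u,p,q) \<in> W \<Longrightarrow> pdr i fb x u p q = s * pdr i Ch x u p q + pdr i Ps x u p q"
  unfolding fb_def by (simp add: ds)

lemma D13: assumes w: "(x,u,p,q) \<in> W"
  shows "pdr 3 f x u p q = - 3 * F x u p q * m x u p q * iA x u p q + 3 * F2 x u p q * iF x u p q"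
proof -
  have 1: "pdr 3 (Dhat f E) x u p q = Dhat f (pdr 3 E) x u p q + e x u p q + pdr 3 f x u p q * pdr 3 E x u p q"
    using comm_q[OF W alg_f alg_E w] by (simp add: e_def)
  have 2: "pdr 3 (Dhat f E) x u p q = fb x u p q * b x u p q"
    using pdr_cong'[OF W DE_ag w] w by (simp add: ds D1 pq0)
  have 3: "Dhat f (pdr 3 E) x u p q = F x u p q * m x u p q * (iF x u p q * iF x u p q)
      - 2 * A x u p q * F2 x u p q * (iF x u p q * iF x u p q * iF x u p q)"
    using Dhat_cong[OF W p3E_ag w] w by (simp add: ds D10 d_iF algebra_simps)
  have "pdr 3 f x u p q * (A x u p q * (iF x u p q * iF x u p q)) =
     - F x u p q * m x u p q * (iF x u p q * iF x u p q) - 2 * m x u p q * iF x u p q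
      + 3 * A x u p q * F2 x u p q * (iF x u p q * iF x u p q * iF x u p q)"
    using 1 unfolding 2 3 D7[OF w] D12[OF w] by (simp add: algebra_simps)
  then show ?thesis using A_nz[OF w] F_nz[OF w] by (simp add: iFv[OF w] iAv[OF w] field_simps)
qed

lemma D14: assumes w: "(x,u,p,q) \<in> W"
  shows "Dhat f c x u p q = g x u p q * F x u p q + E x u p q * a1 x u p q"
proof -
  have "pdr (Suc 0) (Dhat f Ch) x u p q = Dhat f (pdr (Suc 0) Ch) x u p q"
    using comm_u[OF W alg_f alg_Ch w] by (simp add: pq0)
  moreover have "pdr (Suc 0) (Dhat f Ch) x u p q = g x u p q * F x u p q + E x u p q * a1 x u p q"
    using pdr_cong'[OF W DX_ag w] w by (simp add: ds D2 g_def DX_def[symmetric])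
  ultimately show ?thesis by (simp add: c_def)
qed

lemma D15: assumes w: "(x,u,p,q) \<in> W"
  shows "Dhat f m x u p q = F x u p q * (g x u p q - fb x u p q * a x u p q)"
  unfolding m_def using w by (simp add: ds D14 eqn Dha algebra_simps)

lemma c_m: "c x u p q = m x u p q + E x u p q * a x u p q" by (simp add: m_def)


lemma DF2: "Dhat f F2 = F3" by (simp add: F3_def)
lemma Dg: "Dhat f g = g1" by (simp add: g1_def)

lemma D16: assumes w: "(x,u,p,q) \<in> W"
  shows "pdr 2 f x u p q = s * F x u p q * F x u p q
     + 3 * F x u p q * F x u p q * (fb x u p q * a x u p q - g x u p q) * iA x u p q
     + 3 * m x u p q * F2 x u p q * iA x u p q + F3 x u p q * iF x u p q
     - 3 * F2 x u p q * F2 x u p q * (iF x u p q * iF x u p q)"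
proof -
  have 1: "pdr 2 (Dhat f E) x u p q = Dhat f e x u p q + g x u p q + pdr 2 f x u p q * (A x u p q * (iF x u p q * iF x u p q))"
    using comm_p[OF W alg_f alg_E w] D7[OF w] by (simp add: e_def g_def)
  have 2: "pdr 2 (Dhat f E) x u p q = (s * (A x u p q * iF x u p q + E x u p q * b x u p q) + Ch x u p q * b x u p q) * F x u p q
      + fb x u p q * (b1 x u p q + a x u p q)"
    using pdr_cong'[OF W DE_ag w] w by (simp add: ds D3 pfb D9 contact)
  have 3: "Dhat f e x u p q = Dhat f (\<lambda>x u p q. 2 * m x u p q * iF x u p q - A x u p q * F2 x u p q * (iF x u p q * iF x u p q * iF x u p q)
     + fb x u p q * b x u p q) x u p q"
    using Dhat_cong[OF W e_ag w] .
  have k: "A x u p q * (iF x u p q * iF x u p q) \<noteq> 0" using A_nz[OF w] F_nz[OF w] by (simp add: iFv[OF w])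
  have "pdr 2 f x u p q = ((s * (A x u p q * iF x u p q + E x u p q * b x u p q) + Ch x u p q * b x u p q) * F x u p q
      + fb x u p q * (b1 x u p q + a x u p q) - Dhat f e x u p q - g x u p q) / (A x u p q * (iF x u p q * iF x u p q))"
    using k by (rule solve) (use 1 2 in simp)
  also have "\<dots> = s * F x u p q * F x u p q
     + 3 * F x u p q * F x u p q * (fb x u p q * a x u p q - g x u p q) * iA x u p q
     + 3 * m x u p q * F2 x u p q * iA x u p q + F3 x u p q * iF x u p q
     - 3 * F2 x u p q * F2 x u p q * (iF x u p q * iF x u p q)"
    unfolding 3 using w A_nz[OF w] F_nz[OF w]
    by (simp add: ds D15 d_iF D10 DF2 Dfb Dhb alg_iA iFv iAv field_simps)
  finally show ?thesis .
qed

lemma D17: assumes w: "(x,u,p,q) \<in> W"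
  shows "pdr (Suc 0) f x u p q = ((s * (m x u p q + E x u p q * a x u p q) + Ch x u p q * a x u p q + A x u p q) * F x u p q
      + fb x u p q * a1 x u p q - g1 x u p q) * (F x u p q * F x u p q * iA x u p q)"
proof -
  have 1: "pdr (Suc 0) (Dhat f E) x u p q = g1 x u p q + pdr (Suc 0) f x u p q * (A x u p q * (iF x u p q * iF x u p q))"
    using comm_u[OF W alg_f alg_E w] D7[OF w] by (simp add: g_def[symmetric] Dg)
  have 2: "pdr (Suc 0) (Dhat f E) x u p q = (s * (m x u p q + E x u p q * a x u p q) + Ch x u p q * a x u p q + A x u p q) * F x u p q
      + fb x u p q * a1 x u p q"
    using pdr_cong'[OF W DE_ag w] w by (simp add: ds D2 pfb A_eq c_def[symmetric] c_m)
  have k: "A x u p q * (iF x u p q * iF x u p q) \<noteq> 0" using A_nz[OF w] F_nz[OF w] by (simp add: iFv[OF w])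
  have "pdr (Suc 0) f x u p q = ((s * (m x u p q + E x u p q * a x u p q) + Ch x u p q * a x u p q + A x u p q) * F x u p q
      + fb x u p q * a1 x u p q - g1 x u p q) / (A x u p q * (iF x u p q * iF x u p q))"
    using k by (rule solve) (use 1 2 in simp)
  also have "\<dots> = ((s * (m x u p q + E x u p q * a x u p q) + Ch x u p q * a x u p q + A x u p q) * F x u p q
      + fb x u p q * a1 x u p q - g1 x u p q) * (F x u p q * F x u p q * iA x u p q)"
    using A_nz[OF w] F_nz[OF w] by (simp add: iFv[OF w] iAv[OF w] field_simps)
  finally show ?thesis .
qed

lemma I1v: "(x,u,p,q) \<in> W \<Longrightarrow> I1 f x u p q = 3 * F x u p q * m x u p q * iA x u p q - 3 * F2 x u p q * iF x u p q"
  using D13 by (simp add: I1_def pdq_pdr)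
lemma I1_ag: "agree W (I1 f) (\<lambda>x u p q. 3 * F x u p q * m x u p q * iA x u p q - 3 * F2 x u p q * iF x u p q)"
  using I1v by (auto simp: agree_def)

lemma I2v: assumes w: "(x,u,p,q) \<in> W"
  shows "I2 f x u p q = 2 * F x u p q * F x u p q * (g x u p q - fb x u p q * a x u p q) * iA x u p q
     - s * F x u p q * F x u p q - F x u p q * F x u p q * m x u p q * m x u p q * (iA x u p q * iA x u p q)"
proof -
  have e1: "I2 f x u p q = - (2/9) * (I1 f x u p q)^2 - pdr 2 f x u p q - (1/3) * Dhat f (I1 f) x u p q"
    by (simp add: I2_def pdp_pdr)
  have e2: "Dhat f (I1 f) x u p q = Dhat f (\<lambda>x u p q. 3 * F x u p q * m x u p q * iA x u p q - 3 * F2 x u p q * iF x u p q) x u p q"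
    using Dhat_cong[OF W I1_ag w] .
  show ?thesis unfolding e1 e2 using w A_nz[OF w] F_nz[OF w]
    by (simp add: I1v D16 ds D15 d_iF d_iA DF DF2 alg_iA iFv iAv field_simps power2_eq_square)
qed

lemma I2_ag: "agree W (I2 f) (\<lambda>x u p q. 2 * F x u p q * F x u p q * (g x u p q - fb x u p q * a x u p q) * iA x u p q
     - s * F x u p q * F x u p q - F x u p q * F x u p q * m x u p q * m x u p q * (iA x u p q * iA x u p q))"
  using I2v by (auto simp: agree_def)

lemma I3v: assumes w: "(x,u,p,q) \<in> W"
  shows "I3 f x u p q = - (F x u p q * F x u p q * F x u p q)"
proof -
  have e1: "I3 f x u p q = - (1/3) * I1 f x u p q * I2 f x u p q - pdr (Suc 0) f x u p q - (1/2) * Dhat f (I2 f) x u p q"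
    by (simp add: I3_def pdu_pdr)
  have e2: "Dhat f (I2 f) x u p q = Dhat f (\<lambda>x u p q. 2 * F x u p q * F x u p q * (g x u p q - fb x u p q * a x u p q) * iA x u p q
     - s * F x u p q * F x u p q - F x u p q * F x u p q * m x u p q * m x u p q * (iA x u p q * iA x u p q)) x u p q"
    using Dhat_cong[OF W I2_ag w] .
  show ?thesis unfolding e1 e2 using w A_nz[OF w] F_nz[OF w]
    by (simp add: I1v I2v D17 ds D15 d_iA DF Dg Dfb Dha alg_iA iFv iAv field_simps)
qed


lemma J3v: assumes w: "(x,u,p,q) \<in> W" shows "J3 f x u p q = - F x u p q"
proof -
  have "(- F x u p q) ^ 3 = I3 f x u p q" using I3v[OF w] by (simp add: power3_eq_cube)
  then show ?thesis unfolding J3_def by (intro odd_real_root_unique) simp_all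
qed

lemma J3_ag: "agree W (J3 f) (\<lambda>x u p q. - F x u p q)"
  using J3v by (auto simp: agree_def)

lemma I4v: assumes w: "(x,u,p,q) \<in> W" shows "I4 f x u p q = - b x u p q"
proof -
  have "I4 f x u p q = pdr 3 (\<lambda>x u p q. - F x u p q) x u p q"
    unfolding I4_def pdq_pdr using pdr_cong'[OF W J3_ag w] .
  then show ?thesis using w by (simp add: ds D1)
qed

lemma DJ3: assumes w: "(x,u,p,q) \<in> W" shows "Dhat f (J3 f) x u p q = - F2 x u p q"
  using Dhat_cong[OF W J3_ag w] w by (simp add: ds DF)

lemma pJ3: assumes w: "(x,u,p,q) \<in> W" shows "pdr (Suc 0) (J3 f) x u p q = - a1 x u p q"
  using pdr_cong'[OF W J3_ag w] w by (simp add: ds D2)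

lemma I5v: assumes w: "(x,u,p,q) \<in> W" shows "I5 f x u p q = - m x u p q * iA x u p q"
  unfolding I5_def using w A_nz[OF w] F_nz[OF w]
  by (simp add: J3v DJ3 I1v iFv iAv field_simps power2_eq_square)

lemma I5_ag: "agree W (I5 f) (\<lambda>x u p q. - m x u p q * iA x u p q)"
  using I5v by (auto simp: agree_def)

lemma pq_m: assumes w: "(x,u,p,q) \<in> W"
  shows "pdr 3 m x u p q = - A x u p q * (iF x u p q * iF x u p q) * a x u p q"
  unfolding m_def using w by (simp add: ds pq0 D7)

lemma I7v: assumes w: "(x,u,p,q) \<in> W" shows "I7 f x u p q = - a x u p q"
proof -
  have "pdq (I5 f) x u p q = pdr 3 (\<lambda>x u p q. - m x u p q * iA x u p q) x u p q"
    unfolding pdq_pdr using pdr_cong'[OF W I5_ag w] .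
  then show ?thesis unfolding I7_def using w A_nz[OF w] F_nz[OF w]
    by (simp add: ds alg_iA pq_m pq0 J3v iFv iAv field_simps power2_eq_square)
qed

lemma DI5: assumes w: "(x,u,p,q) \<in> W"
  shows "Dhat f (I5 f) x u p q = - (F x u p q * (g x u p q - fb x u p q * a x u p q)) * iA x u p q
     + m x u p q * (F x u p q * m x u p q) * (iA x u p q * iA x u p q)"
  using Dhat_cong[OF W I5_ag w] w by (simp add: ds alg_iA D15 d_iA)

lemma p2c: assumes w: "(x,u,p,q) \<in> W"
  shows "pdr 2 c x u p q = h x u p q * iF x u p q - A x u p q * (a1 x u p q * (iF x u p q * iF x u p q))
     + g x u p q * b x u p q + E x u p q * pa x u p q"
proof -
  have "pdr 2 c x u p q = pdr (Suc 0) (pdr 2 Ch) x u p q"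
    unfolding c_def using pdr_comm_pt[OF W alg_Ch w, of 2 "Suc 0"] by simp
  also have "\<dots> = pdr (Suc 0) (\<lambda>x u p q. A x u p q * iF x u p q + E x u p q * b x u p q) x u p q"
    using pdr_cong'[OF W p2Ch_ag w] .
  finally show ?thesis using w by (simp add: ds d_iF D2 D6a h_def g_def algebra_simps)
qed

lemma pI5: assumes w: "(x,u,p,q) \<in> W"
  shows "pdr 2 (I5 f) x u p q = - ((h x u p q * iF x u p q - A x u p q * (a1 x u p q * (iF x u p q * iF x u p q))
     + g x u p q * b x u p q + E x u p q * pa x u p q - (e x u p q * a x u p q + E x u p q * pa x u p q)) * iA x u p q
     + m x u p q * (- (m x u p q * b x u p q - A x u p q * a x u p q * iF x u p q) * (iA x u p q * iA x u p q)))"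
proof -
  have pm: "pdr 2 m x u p q = h x u p q * iF x u p q - A x u p q * (a1 x u p q * (iF x u p q * iF x u p q))
     + g x u p q * b x u p q + E x u p q * pa x u p q - (e x u p q * a x u p q + E x u p q * pa x u p q)"
    unfolding m_def using w by (simp add: ds p2c e_def[symmetric] pa_def[symmetric])
  have "pdr 2 (I5 f) x u p q = pdr 2 (\<lambda>x u p q. - m x u p q * iA x u p q) x u p q"
    using pdr_cong'[OF W I5_ag w] .
  then show ?thesis using w by (simp add: ds alg_iA pm d_iA D11 algebra_simps)
qed

lemma Qv: assumes w: "(x,u,p,q) \<in> W"
  shows "h x u p q = - Qinv f x u p q * A x u p q"
  unfolding Qinv_def using w A_nz[OF w] F_nz[OF w]
  by (simp add: I1v I7v J3v pI5 pJ3 I4v DI5 D12 pdp_pdr pdu_pdr iFv iAv field_simps power2_eq_square)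

lemma Kv: assumes w: "(x,u,p,q) \<in> W" shows "Kinv f x u p q = s"
  unfolding Kinv_def I9_def using w A_nz[OF w] F_nz[OF w]
  by (simp add: J3v DI5 I2v I5v iFv iAv field_simps power2_eq_square)


lemma final_point:
  assumes w: "(x,u,p,q) \<in> W"
  shows "let A' = A x u p q; eta = E; fb' = s * Ch x u p q + Ps x u p q;
             j = J3 f x u p q; i1 = I1 f x u p q; i2 = I2 f x u p q; i4 = I4 f x u p q;
             i5 = I5 f x u p q; i7 = I7 f x u p q; e' = eta x u p q
         in A' \<noteq> 0
          \<and> Dhat f A x u p q = j * i5 * A'
          \<and> pdr (Suc 0) A x u p q = - Qinv f x u p q * A'
          \<and> pdr 2 A x u p q = (i4 * i5 - i7 / j) * A'
          \<and> pdr 3 A x u p q = 0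
          \<and> Dhat f Ph x u p q = - j
          \<and> pdr (Suc 0) Ph x u p q = - i7
          \<and> pdr 2 Ph x u p q = - i4
          \<and> Dhat f eta x u p q = - j * fb'
          \<and> pdr (Suc 0) eta x u p q = ((s + i5^2) / 2 + i2 / (2 * j^2)) * A' - i7 * fb'
          \<and> pdr 2 eta x u p q = (i5 / j + i1 / (3 * j^2)) * A' - i4 * fb'
          \<and> pdr 3 eta x u p q = A' / j^2
          \<and> Dhat f Ch x u p q = - j * e'
          \<and> pdr (Suc 0) Ch x u p q = - i5 * A' - i7 * e'
          \<and> pdr 2 Ch x u p q = - A' / j - i4 * e'
          \<and> i7 * Dhat f Ps x u p q = j * (pdr (Suc 0) Ps x u p q - A')
          \<and> pdr 0 Ps x u p q = Ch x u p q * pdr 0 Ph x u p q - p * A'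
          \<and> pdr 2 Ps x u p q = - i4 * Ch x u p q
          \<and> Ch x u p q = Dhat f Ps x u p q / Dhat f Ph x u p q"
proof -
  note nz = A_nz[OF w] F_nz[OF w]
  note vals = J3v[OF w] I1v[OF w] I2v[OF w] I4v[OF w] I5v[OF w] I7v[OF w] iFv[OF w] iAv[OF w]
  have fbe: "s * Ch x u p q + Ps x u p q = fb x u p q" by (simp add: fb_def)
  show ?thesis unfolding Let_def fbe
  proof (intro conjI)
    show "A x u p q \<noteq> 0" by (rule nz(1))
    show "Dhat f A x u p q = J3 f x u p q * I5 f x u p q * A x u p q"
      using nz by (simp add: D10[OF w] vals field_simps)
    show "pdr (Suc 0) A x u p q = - Qinv f x u p q * A x u p q"
      using Qv[OF w] by (simp add: h_def)
    show "pdr 2 A x u p q = (I4 f x u p q * I5 f x u p q - I7 f x u p q / J3 f x u p q) * A x u p q"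
      using nz by (simp add: D11[OF w] vals field_simps)
    show "pdr 3 A x u p q = 0" by (rule pq0)
    show "Dhat f Ph x u p q = - J3 f x u p q" by (simp add: vals F_def)
    show "pdr (Suc 0) Ph x u p q = - I7 f x u p q" by (simp add: vals a_def)
    show "pdr 2 Ph x u p q = - I4 f x u p q" by (simp add: vals b_def)
    show "Dhat f E x u p q = - J3 f x u p q * fb x u p q" by (simp add: eqn[OF w] vals)
    show "pdr (Suc 0) E x u p q = ((s + (I5 f x u p q)^2) / 2 + I2 f x u p q / (2 * (J3 f x u p q)^2)) * A x u p q
        - I7 f x u p q * fb x u p q"
      using nz by (simp add: g_def[symmetric] vals field_simps power2_eq_square)
    show "pdr 2 E x u p q = (I5 f x u p q / J3 f x u p q + I1 f x u p q / (3 * (J3 f x u p q)^2)) * A x u p q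
        - I4 f x u p q * fb x u p q"
      using nz by (simp add: e_def[symmetric] D12[OF w] vals field_simps power2_eq_square)
    show "pdr 3 E x u p q = A x u p q / (J3 f x u p q)^2"
      using nz by (simp add: D7[OF w] vals field_simps power2_eq_square)
    show "Dhat f Ch x u p q = - J3 f x u p q * E x u p q"
      using D8[OF w] by (simp add: DX_def vals)
    show "pdr (Suc 0) Ch x u p q = - I5 f x u p q * A x u p q - I7 f x u p q * E x u p q"
      using nz by (simp add: c_def[symmetric] c_m vals field_simps)
    show "pdr 2 Ch x u p q = - A x u p q / J3 f x u p q - I4 f x u p q * E x u p q"
      using nz by (simp add: D9[OF w] vals field_simps)
    show "I7 f x u p q * Dhat f Ps x u p q = J3 f x u p q * (pdr (Suc 0) Ps x u p q - A x u p q)"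
      by (simp add: DPs[OF w] A_eq vals algebra_simps)
    show "pdr 0 Ps x u p q = Ch x u p q * pdr 0 Ph x u p q - p * A x u p q" by (rule contact(1)[OF w])
    show "pdr 2 Ps x u p q = - I4 f x u p q * Ch x u p q" by (simp add: contact(2)[OF w] vals)
    show "Ch x u p q = Dhat f Ps x u p q / Dhat f Ph x u p q"
      using nz by (simp add: DPs[OF w] F_def[symmetric])
  qed
qed

lemma A_q: "A x u p 0 = A x u p q" using q0[OF qf_A] .

lemma final_concl:
  shows "(\<forall>x u p q. (x,u,p,q) \<in> W \<longrightarrow> s = Kinv f x u p q) \<and>
    (\<exists>a1 :: fn3. smooth4 W (lift3 a1) \<and>
      (\<forall>x u p q. (x,u,p,q) \<in> W \<longrightarrow>
        (let A = a1 x u p; eta = eta_of f phi chi; fb = s * chi x u p + psi x u p;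
             j = J3 f x u p q; i1 = I1 f x u p q; i2 = I2 f x u p q; i4 = I4 f x u p q;
             i5 = I5 f x u p q; i7 = I7 f x u p q; e = eta x u p q
         in A \<noteq> 0
          \<and> Dhat f (lift3 a1) x u p q = j * i5 * A
          \<and> pdu (lift3 a1) x u p q = - Qinv f x u p q * A
          \<and> pdp (lift3 a1) x u p q = (i4 * i5 - i7 / j) * A
          \<and> pdq (lift3 a1) x u p q = 0
          \<and> Dhat f (lift3 phi) x u p q = - j
          \<and> pdu (lift3 phi) x u p q = - i7
          \<and> pdp (lift3 phi) x u p q = - i4
          \<and> Dhat f eta x u p q = - j * fb
          \<and> pdu eta x u p q = ((s + i5^2) / 2 + i2 / (2 * j^2)) * A - i7 * fb
          \<and> pdp eta x u p q = (i5 / j + i1 / (3 * j^2)) * A - i4 * fb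
          \<and> pdq eta x u p q = A / j^2
          \<and> Dhat f (lift3 chi) x u p q = - j * e
          \<and> pdu (lift3 chi) x u p q = - i5 * A - i7 * e
          \<and> pdp (lift3 chi) x u p q = - A / j - i4 * e
          \<and> i7 * Dhat f (lift3 psi) x u p q = j * (pdu (lift3 psi) x u p q - A)
          \<and> pdx (lift3 psi) x u p q = chi x u p * pdx (lift3 phi) x u p q - p * A
          \<and> pdp (lift3 psi) x u p q = - i4 * chi x u p
          \<and> chi x u p = Dhat f (lift3 psi) x u p q / Dhat f (lift3 phi) x u p q)))"
proof -
  define a1' where "a1' = (\<lambda>x u p. A x u p 0)"
  have L: "lift3 a1' = A" by (simp add: a1'_def lift3_def A_q fun_eq_iff)
  have sm: "smooth4 W (lift3 a1')" unfolding L by (rule alg_smooth[OF W alg_A])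
  have P: "let A = a1' x u p; eta = eta_of f phi chi; fb = s * chi x u p + psi x u p;
                 j = J3 f x u p q; i1 = I1 f x u p q; i2 = I2 f x u p q; i4 = I4 f x u p q;
                 i5 = I5 f x u p q; i7 = I7 f x u p q; e = eta x u p q
             in A \<noteq> 0
              \<and> Dhat f (lift3 a1') x u p q = j * i5 * A
              \<and> pdu (lift3 a1') x u p q = - Qinv f x u p q * A
              \<and> pdp (lift3 a1') x u p q = (i4 * i5 - i7 / j) * A
              \<and> pdq (lift3 a1') x u p q = 0
              \<and> Dhat f (lift3 phi) x u p q = - j
              \<and> pdu (lift3 phi) x u p q = - i7
              \<and> pdp (lift3 phi) x u p q = - i4
              \<and> Dhat f eta x u p q = - j * fb
              \<and> pdu eta x u p q = ((s + i5^2) / 2 + i2 / (2 * j^2)) * A - i7 * fb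
              \<and> pdp eta x u p q = (i5 / j + i1 / (3 * j^2)) * A - i4 * fb
              \<and> pdq eta x u p q = A / j^2
              \<and> Dhat f (lift3 chi) x u p q = - j * e
              \<and> pdu (lift3 chi) x u p q = - i5 * A - i7 * e
              \<and> pdp (lift3 chi) x u p q = - A / j - i4 * e
              \<and> i7 * Dhat f (lift3 psi) x u p q = j * (pdu (lift3 psi) x u p q - A)
              \<and> pdx (lift3 psi) x u p q = chi x u p * pdx (lift3 phi) x u p q - p * A
              \<and> pdp (lift3 psi) x u p q = - i4 * chi x u p
              \<and> chi x u p = Dhat f (lift3 psi) x u p q / Dhat f (lift3 phi) x u p q" if w: "(x,u,p,q) \<in> W" for x u p q
  proof -
    have c1: "chi x u p = Ch x u p q" "psi x u p = Ps x u p q" by (simp_all add: Ch_def Ps_def lift3_def)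
    have c2: "a1' x u p = A x u p q" by (simp add: a1'_def A_q)
    show ?thesis
      using final_point[OF w]
      unfolding L c1 c2 Ph_def[symmetric] Ps_def[symmetric] Ch_def[symmetric] E_def[symmetric]
        pdx_pdr pdu_pdr pdp_pdr pdq_pdr One_nat_def .
  qed
  show ?thesis using Kv sm P by metis
qed

end

theorem mainTheorem3:
  fixes W :: "(real \<times> real \<times> real \<times> real) set"
    and f :: fn4 and s :: real and phi psi chi :: fn3
  assumes "open W"
    and "smooth4 W f"
    and "\<forall>x u p q. (x,u,p,q) \<in> W \<longrightarrow> I3 f x u p q \<noteq> 0"
    and "contact_equiv_on W f s phi psi chi"
  shows "(\<forall>x u p q. (x,u,p,q) \<in> W \<longrightarrow> s = Kinv f x u p q) \<and>
    (\<exists>a1 :: fn3. smooth4 W (lift3 a1) \<and>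
      (\<forall>x u p q. (x,u,p,q) \<in> W \<longrightarrow>
        (let A = a1 x u p; eta = eta_of f phi chi; fb = s * chi x u p + psi x u p;
             j = J3 f x u p q; i1 = I1 f x u p q; i2 = I2 f x u p q; i4 = I4 f x u p q;
             i5 = I5 f x u p q; i7 = I7 f x u p q; e = eta x u p q
         in A \<noteq> 0
          \<comment> \<open>(1)\<close>
          \<and> Dhat f (lift3 a1) x u p q = j * i5 * A
          \<and> pdu (lift3 a1) x u p q = - Qinv f x u p q * A
          \<and> pdp (lift3 a1) x u p q = (i4 * i5 - i7 / j) * A
          \<and> pdq (lift3 a1) x u p q = 0
          \<comment> \<open>(2)\<close>
          \<and> Dhat f (lift3 phi) x u p q = - j
          \<and> pdu (lift3 phi) x u p q = - i7
          \<and> pdp (lift3 phi) x u p q = - i4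
          \<comment> \<open>(3)\<close>
          \<and> Dhat f eta x u p q = - j * fb
          \<and> pdu eta x u p q = ((s + i5^2) / 2 + i2 / (2 * j^2)) * A - i7 * fb
          \<and> pdp eta x u p q = (i5 / j + i1 / (3 * j^2)) * A - i4 * fb
          \<and> pdq eta x u p q = A / j^2
          \<and> Dhat f (lift3 chi) x u p q = - j * e
          \<and> pdu (lift3 chi) x u p q = - i5 * A - i7 * e
          \<and> pdp (lift3 chi) x u p q = - A / j - i4 * e
          \<and> i7 * Dhat f (lift3 psi) x u p q = j * (pdu (lift3 psi) x u p q - A)
          \<and> pdx (lift3 psi) x u p q = chi x u p * pdx (lift3 phi) x u p q - p * A
          \<and> pdp (lift3 psi) x u p q = - i4 * chi x u p
          \<and> chi x u p = Dhat f (lift3 psi) x u p q / Dhat f (lift3 phi) x u p q)))"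
  using final_concl[OF assms(1) assms(2) assms(4)] .

end
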